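(* Let $M$ be a proper metric space and $\mathcal{X},\mathcal{Y}$ big families in $M$. Then $$0\to CX_\bullet(\mathcal{X}\Cap\mathcal{Y})\to CX_\bullet(\mathcal{X})\oplus CX_\bullet(\mathcal{Y})\to CX_\bullet(\mathcal{X}\Cup\mathcal{Y})\to0$$ is a short exact sequence of chain complexes, where the first map is the diagonal inclusion $\mu\mapsto(\mu,\mu)$ and the second is $(\mu_1,\mu_2)\mapsto\mu_1-\mu_2$. The same holds with each complex replaced by its quotient complex $CX^\alpha_\bullet$ of anti-symmetric coarse chains.
   Context: A big family is a collection of subsets closed under subsets, finite unions and $R$-thickenings; $\mathcal{X}\Cap\mathcal{Y}$ and $\mathcal{X}\Cup\mathcal{Y}$ denote elementwise intersections and unions. With $M^{n+1}$ carrying the max metric and $\Delta_R$ the $R$-thickening of the multi-diagonal, a coarse $n$-chain is a complex-valued locally finite regular Borel measure on $M^{n+1}$ supported in some $\Delta_R$; $CX_n(\mathcal{Y})$ consists of those vanishing outside $Y^{n+1}$ for some $Y\in\mathcal{Y}$; differential $\partial\mu=\sum_i(-1)^i(\pi_i)_*\mu$ with $\pi_i$ omitting coordinate $i$. $CX^\alpha_n(\mathcal{Y})$ is the quotient of $CX_n(\mathcal{Y})$ identifying measures that arise from each other by a signed permutation of the variables (equivalently, identifying measures with equal integrals against all anti-symmetric coarse cochains on $\mathcal{Y}$). *)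

theory Defs
  imports "HOL-Analysis.Analysis"
begin

text \<open>Points of M^(n+1) are extensional functions on indices 0..n.\<close>
definition tup :: "nat \<Rightarrow> (nat \<Rightarrow> 'a) set" where
  "tup n = PiE {..n} (\<lambda>_. UNIV)"

definition tdist :: "nat \<Rightarrow> (nat \<Rightarrow> 'a::metric_space) \<Rightarrow> (nat \<Rightarrow> 'a) \<Rightarrow> real" where
  "tdist n x y = Max ((\<lambda>i. dist (x i) (y i)) ` {..n})"

definition tbounded :: "nat \<Rightarrow> (nat \<Rightarrow> 'a::metric_space) set \<Rightarrow> bool" where
  "tbounded n A \<longleftrightarrow> A \<subseteq> tup n \<and> (\<exists>x\<in>tup n. \<exists>r. \<forall>y\<in>A. tdist n x y \<le> r)"

text \<open>Borel sets of M^(n+1) (product sigma algebra = Borel, M being separable).\<close>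
definition tborel :: "nat \<Rightarrow> (nat \<Rightarrow> 'a::metric_space) set set" where
  "tborel n = sets (PiM {..n} (\<lambda>_. borel))"

text \<open>Bounded Borel sets: the domain of a locally finite complex measure.\<close>
definition bbsets :: "nat \<Rightarrow> (nat \<Rightarrow> 'a::metric_space) set set" where
  "bbsets n = {A \<in> tborel n. tbounded n A}"

definition diag_thick :: "nat \<Rightarrow> real \<Rightarrow> (nat \<Rightarrow> 'a::metric_space) set" where
  "diag_thick n R = {x \<in> tup n. \<exists>m. \<forall>i\<le>n. dist (x i) m \<le> R}"

definition vanishes_outside :: "nat \<Rightarrow> ((nat \<Rightarrow> 'a::metric_space) set \<Rightarrow> complex) \<Rightarrow> (nat \<Rightarrow> 'a) set \<Rightarrow> bool" where
  "vanishes_outside n \<mu> S \<longleftrightarrow> (\<forall>C\<in>bbsets n. C \<inter> S = {} \<longrightarrow> \<mu> C = 0)"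

definition cm_countably_additive :: "nat \<Rightarrow> ((nat \<Rightarrow> 'a::metric_space) set \<Rightarrow> complex) \<Rightarrow> bool" where
  "cm_countably_additive n \<mu> \<longleftrightarrow>
     (\<forall>A :: nat \<Rightarrow> (nat \<Rightarrow> 'a) set. (\<forall>k. A k \<in> bbsets n) \<longrightarrow> disjoint_family A \<longrightarrow>
        (\<Union>k. A k) \<in> bbsets n \<longrightarrow> (\<lambda>k. \<mu> (A k)) sums \<mu> (\<Union>k. A k))"

text \<open>Regularity (inner by compact, outer by open sets), expressed through the
  variation on bounded Borel sets.\<close>
definition cm_regular :: "nat \<Rightarrow> ((nat \<Rightarrow> 'a::metric_space) set \<Rightarrow> complex) \<Rightarrow> bool" where
  "cm_regular n \<mu> \<longleftrightarrow>
     (\<forall>A\<in>bbsets n. \<forall>e>0. \<exists>K U. compact K \<and> K \<subseteq> A \<and> open U \<and> A \<subseteq> U \<and>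
        (\<forall>C\<in>bbsets n. C \<subseteq> U - K \<longrightarrow> cmod (\<mu> C) < e))"

text \<open>A coarse n-chain: a complex-valued locally finite regular Borel measure on M^(n+1),
  given by its values on bounded Borel sets (value 0 by convention elsewhere),
  supported in some thickened diagonal.\<close>
definition coarse_chain :: "nat \<Rightarrow> ((nat \<Rightarrow> 'a::metric_space) set \<Rightarrow> complex) \<Rightarrow> bool" where
  "coarse_chain n \<mu> \<longleftrightarrow>
     (\<forall>A. A \<notin> bbsets n \<longrightarrow> \<mu> A = 0) \<and> cm_countably_additive n \<mu> \<and> cm_regular n \<mu> \<and>
     (\<exists>R. vanishes_outside n \<mu> (diag_thick n R))"

definition thickening :: "real \<Rightarrow> 'a::metric_space set \<Rightarrow> 'a set" where
  "thickening R Y = {x. \<exists>y\<in>Y. dist x y \<le> R}"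

definition big_family :: "'a::metric_space set set \<Rightarrow> bool" where
  "big_family \<Y> \<longleftrightarrow> {} \<in> \<Y> \<and>
     (\<forall>Y\<in>\<Y>. \<forall>Z. Z \<subseteq> Y \<longrightarrow> Z \<in> \<Y>) \<and>
     (\<forall>Y\<in>\<Y>. \<forall>Z\<in>\<Y>. Y \<union> Z \<in> \<Y>) \<and>
     (\<forall>Y\<in>\<Y>. \<forall>R\<ge>0. thickening R Y \<in> \<Y>)"

definition fam_Int :: "'a set set \<Rightarrow> 'a set set \<Rightarrow> 'a set set" where
  "fam_Int \<X> \<Y> = {X \<inter> Y | X Y. X \<in> \<X> \<and> Y \<in> \<Y>}"

definition fam_Un :: "'a set set \<Rightarrow> 'a set set \<Rightarrow> 'a set set" where
  "fam_Un \<X> \<Y> = {X \<union> Y | X Y. X \<in> \<X> \<and> Y \<in> \<Y>}"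

definition CX :: "nat \<Rightarrow> 'a::metric_space set set \<Rightarrow> ((nat \<Rightarrow> 'a) set \<Rightarrow> complex) set" where
  "CX n \<Y> = {\<mu>. coarse_chain n \<mu> \<and> (\<exists>Y\<in>\<Y>. vanishes_outside n \<mu> (PiE {..n} (\<lambda>_. Y)))}"

definition face :: "nat \<Rightarrow> nat \<Rightarrow> (nat \<Rightarrow> 'a) \<Rightarrow> (nat \<Rightarrow> 'a)" where
  "face n i x = (\<lambda>j. if j < n then x (if j < i then j else Suc j) else undefined)"

text \<open>Pairwise thickened diagonal, containing diag_thick n R when S = 2R; used only to
  cut the preimage down to a bounded set (the measure vanishes outside it).\<close>
definition pair_thick :: "nat \<Rightarrow> real \<Rightarrow> (nat \<Rightarrow> 'a::metric_space) set" where
  "pair_thick n S = {x \<in> tup n. \<forall>i\<le>n. \<forall>j\<le>n. dist (x i) (x j) \<le> S}"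

definition push_face :: "nat \<Rightarrow> nat \<Rightarrow> ((nat \<Rightarrow> 'a::metric_space) set \<Rightarrow> complex) \<Rightarrow> (nat \<Rightarrow> 'a) set \<Rightarrow> complex" where
  "push_face n i \<mu> B =
     (if B \<in> bbsets (n - 1)
      then \<mu> (face n i -` B \<inter> pair_thick n (2 * (SOME R. vanishes_outside n \<mu> (diag_thick n R))))
      else 0)"

definition bdry :: "nat \<Rightarrow> ((nat \<Rightarrow> 'a::metric_space) set \<Rightarrow> complex) \<Rightarrow> (nat \<Rightarrow> 'a) set \<Rightarrow> complex" where
  "bdry n \<mu> = (\<lambda>B. \<Sum>i\<le>n. (-1) ^ i * push_face n i \<mu> B)"

definition perm_chain :: "(nat \<Rightarrow> nat) \<Rightarrow> ((nat \<Rightarrow> 'a) set \<Rightarrow> complex) \<Rightarrow> (nat \<Rightarrow> 'a) set \<Rightarrow> complex" where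
  "perm_chain \<sigma> \<mu> = (\<lambda>A. \<mu> ((\<lambda>x. x \<circ> \<sigma>) -` A))"

text \<open>The subspace of CX_n(Y) spanned by the differences mu - sign(sigma) sigma_* mu;
  CX^alpha_n(Y) is CX_n(Y) modulo this subspace.\<close>
definition CX_null :: "nat \<Rightarrow> 'a::metric_space set set \<Rightarrow> ((nat \<Rightarrow> 'a) set \<Rightarrow> complex) set" where
  "CX_null n \<Y> = {\<nu>. \<exists>(k::nat) \<mu>s \<sigma>s. (\<forall>j<k. \<mu>s j \<in> CX n \<Y> \<and> \<sigma>s j permutes {..n}) \<and>
      \<nu> = (\<lambda>A. \<Sum>j<k. \<mu>s j A - of_int (sign (\<sigma>s j)) * perm_chain (\<sigma>s j) (\<mu>s j) A)}"

end

theory Submission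
  imports Defs
begin

lemma space_tb: "space (PiM {..n} (\<lambda>_. borel)) = (tup n :: (nat \<Rightarrow> 'a::metric_space) set)"
  by (simp add: space_PiM tup_def)

lemma tborel_sub: "A \<in> tborel n \<Longrightarrow> A \<subseteq> tup n"
  unfolding tborel_def using sets.sets_into_space space_tb by metis

lemma tborel_Int: "A \<in> tborel n \<Longrightarrow> B \<in> tborel n \<Longrightarrow> A \<inter> B \<in> tborel n"
  unfolding tborel_def by auto

lemma tborel_Diff: "A \<in> tborel n \<Longrightarrow> B \<in> tborel n \<Longrightarrow> A - B \<in> tborel n"
  unfolding tborel_def by auto

lemma tborel_empty: "{} \<in> tborel n"
  unfolding tborel_def by auto

lemma tborel_tup: "tup n \<in> tborel n"
  unfolding tborel_def using sets.top space_tb by metis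

lemma tborel_PiE_closed:
  fixes Z :: "'a::metric_space set"
  assumes "closed Z" shows "PiE {..n} (\<lambda>_. Z) \<in> tborel n"
  unfolding tborel_def by (rule sets_PiM_I_finite) (auto intro: borel_closed assms)

lemma tbounded_subset: "tbounded n B \<Longrightarrow> A \<subseteq> B \<Longrightarrow> tbounded n A"
  unfolding tbounded_def by blast

lemma bbsets_subset: "B \<in> bbsets n \<Longrightarrow> A \<subseteq> B \<Longrightarrow> A \<in> tborel n \<Longrightarrow> A \<in> bbsets n"
  unfolding bbsets_def using tbounded_subset by blast

lemma bbsets_Int: "B \<in> bbsets n \<Longrightarrow> S \<in> tborel n \<Longrightarrow> B \<inter> S \<in> bbsets n"
  by (rule bbsets_subset[of B]) (auto simp: bbsets_def intro: tborel_Int)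

lemma bbsets_Diff: "B \<in> bbsets n \<Longrightarrow> S \<in> tborel n \<Longrightarrow> B - S \<in> bbsets n"
  by (rule bbsets_subset[of B]) (auto simp: bbsets_def intro: tborel_Diff)

lemma tup_ne: "undefined_tup \<in> tup n" if "undefined_tup = (\<lambda>i. if i \<le> n then x else undefined)" for x :: 'a
  using that by (auto simp: tup_def PiE_def extensional_def)

lemma bbsets_empty: "({} :: (nat \<Rightarrow> 'a::metric_space) set) \<in> bbsets n"
proof -
  have "(\<lambda>i. if i \<le> n then undefined else undefined) \<in> (tup n :: (nat \<Rightarrow> 'a) set)"
    by (auto simp: tup_def PiE_def extensional_def)
  then show ?thesis by (auto simp: bbsets_def tbounded_def tborel_empty)
qed

lemma bbsets_sub: "A \<in> bbsets n \<Longrightarrow> A \<subseteq> tup n"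
  by (auto simp: bbsets_def tbounded_def)

lemma cc_empty: "coarse_chain n \<mu> \<Longrightarrow> \<mu> {} = 0"
  unfolding coarse_chain_def vanishes_outside_def using bbsets_empty by blast

lemma cc_add2:
  assumes cc: "coarse_chain n \<mu>" and C: "C \<in> bbsets n" and S: "S \<in> tborel n"
  shows "\<mu> C = \<mu> (C \<inter> S) + \<mu> (C - S)"
proof -
  define A where "A = (\<lambda>k::nat. if k = 0 then C \<inter> S else if k = 1 then C - S else {})"
  have Ak: "A k \<in> bbsets n" for k
    using bbsets_Int[OF C S] bbsets_Diff[OF C S] bbsets_empty by (auto simp: A_def)
  have dj: "disjoint_family A"
    unfolding disjoint_family_on_def A_def by auto
  have U: "(\<Union>k. A k) = C"
    unfolding A_def by (auto split: if_splits)
  have "(\<lambda>k. \<mu> (A k)) sums \<mu> C"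
    using cc Ak dj U C unfolding coarse_chain_def cm_countably_additive_def by metis
  moreover have "(\<lambda>k. \<mu> (A k)) sums (\<Sum>k\<in>{0,1}. \<mu> (A k))"
    by (rule sums_finite) (auto simp: A_def cc_empty[OF cc])
  ultimately have "\<mu> C = (\<Sum>k\<in>{0,1}. \<mu> (A k))" using sums_unique2 by blast
  then show ?thesis by (simp add: A_def)
qed

lemma vanish_mono: "vanishes_outside n \<mu> S \<Longrightarrow> S \<subseteq> T \<Longrightarrow> vanishes_outside n \<mu> T"
  unfolding vanishes_outside_def by blast

lemma vanish_split:
  assumes cc: "coarse_chain n \<mu>" and S: "S \<in> tborel n"
    and v1: "vanishes_outside n \<mu> S" and v2: "vanishes_outside n \<mu> T"
    and T: "T \<in> tborel n"
  shows "vanishes_outside n \<mu> (S \<inter> T)"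
  unfolding vanishes_outside_def
proof (intro ballI impI)
  fix C assume C: "C \<in> bbsets n" and d: "C \<inter> (S \<inter> T) = {}"
  have "\<mu> C = \<mu> (C \<inter> S) + \<mu> (C - S)" by (rule cc_add2[OF cc C S])
  moreover have "\<mu> (C - S) = 0" using v1 bbsets_Diff[OF C S] unfolding vanishes_outside_def by blast
  moreover have "\<mu> (C \<inter> S) = 0" using v2 bbsets_Int[OF C S] d unfolding vanishes_outside_def by blast
  ultimately show "\<mu> C = 0" by simp
qed

lemma cc_zero: "coarse_chain n (\<lambda>_::(nat \<Rightarrow> 'a::metric_space) set. 0)"
  unfolding coarse_chain_def cm_countably_additive_def cm_regular_def vanishes_outside_def
proof (intro conjI allI impI ballI)
  fix A :: "nat \<Rightarrow> (nat \<Rightarrow> 'a) set" show "(\<lambda>k. (0::complex)) sums 0" by simp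
next
  fix A :: "(nat \<Rightarrow> 'a) set" and e :: real assume "0 < e"
  then show "\<exists>K U. compact K \<and> K \<subseteq> A \<and> open U \<and> A \<subseteq> U \<and>
        (\<forall>C\<in>bbsets n. C \<subseteq> U - K \<longrightarrow> cmod 0 < e)"
    by (intro exI[of _ "{}"] exI[of _ UNIV]) auto
qed auto

lemma diag_thick_mono: "R \<le> R' \<Longrightarrow> diag_thick n R \<subseteq> diag_thick n R'"
  unfolding diag_thick_def by (auto intro: order_trans)

lemma cc_diff:
  fixes \<mu> \<nu> :: "(nat \<Rightarrow> 'a::metric_space) set \<Rightarrow> complex"
  assumes a: "coarse_chain n \<mu>" and b: "coarse_chain n \<nu>"
  shows "coarse_chain n (\<lambda>A. \<mu> A - \<nu> A)"
proof -
  have ca: "cm_countably_additive n (\<lambda>A. \<mu> A - \<nu> A)"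
    using a b unfolding coarse_chain_def cm_countably_additive_def
    by (intro allI impI sums_diff) auto
  have rg: "cm_regular n (\<lambda>A. \<mu> A - \<nu> A)"
    unfolding cm_regular_def
  proof (intro ballI allI impI)
    fix A :: "(nat \<Rightarrow> 'a) set" and e :: real assume A: "A \<in> bbsets n" and e: "(0::real) < e"
    obtain K1 U1 where 1: "compact K1" "K1 \<subseteq> A" "open U1" "A \<subseteq> U1"
      "\<forall>C\<in>bbsets n. C \<subseteq> U1 - K1 \<longrightarrow> cmod (\<mu> C) < e/2"
      using a A e unfolding coarse_chain_def cm_regular_def by (meson half_gt_zero)
    obtain K2 U2 where 2: "compact K2" "K2 \<subseteq> A" "open U2" "A \<subseteq> U2"
      "\<forall>C\<in>bbsets n. C \<subseteq> U2 - K2 \<longrightarrow> cmod (\<nu> C) < e/2"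
      using b A e unfolding coarse_chain_def cm_regular_def by (meson half_gt_zero)
    show "\<exists>K U. compact K \<and> K \<subseteq> A \<and> open U \<and> A \<subseteq> U \<and>
        (\<forall>C\<in>bbsets n. C \<subseteq> U - K \<longrightarrow> cmod (\<mu> C - \<nu> C) < e)"
    proof (intro exI conjI ballI impI)
      show "compact (K1 \<union> K2)" using 1 2 by auto
      show "K1 \<union> K2 \<subseteq> A" using 1 2 by auto
      show "open (U1 \<inter> U2)" using 1 2 by auto
      show "A \<subseteq> U1 \<inter> U2" using 1 2 by auto
      fix C assume C: "C \<in> bbsets n" "C \<subseteq> U1 \<inter> U2 - (K1 \<union> K2)"
      have "cmod (\<mu> C) < e/2" "cmod (\<nu> C) < e/2" using 1 2 C by auto
      then show "cmod (\<mu> C - \<nu> C) < e" using norm_triangle_ineq4[of "\<mu> C" "\<nu> C"] by linarith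
    qed
  qed
  obtain R1 where R1: "vanishes_outside n \<mu> (diag_thick n R1)" using a coarse_chain_def by blast
  obtain R2 where R2: "vanishes_outside n \<nu> (diag_thick n R2)" using b coarse_chain_def by blast
  have "vanishes_outside n (\<lambda>A. \<mu> A - \<nu> A) (diag_thick n (max R1 R2))"
    using vanish_mono[OF R1 diag_thick_mono[of R1 "max R1 R2"]]
      vanish_mono[OF R2 diag_thick_mono[of R2 "max R1 R2"]]
    unfolding vanishes_outside_def by auto
  with ca rg a b show ?thesis unfolding coarse_chain_def by auto
qed

lemma cc_scale:
  fixes \<mu> :: "(nat \<Rightarrow> 'a::metric_space) set \<Rightarrow> complex"
  assumes a: "coarse_chain n \<mu>"
  shows "coarse_chain n (\<lambda>A. c * \<mu> A)"
proof (cases "c = 0")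
  case True then show ?thesis using cc_zero by simp
next
  case False
  have ca: "cm_countably_additive n (\<lambda>A. c * \<mu> A)"
    using a unfolding coarse_chain_def cm_countably_additive_def
    by (intro allI impI sums_mult) auto
  have rg: "cm_regular n (\<lambda>A. c * \<mu> A)"
    unfolding cm_regular_def
  proof (intro ballI allI impI)
    fix A :: "(nat \<Rightarrow> 'a) set" and e :: real assume A: "A \<in> bbsets n" and e: "(0::real) < e"
    have e': "e / cmod c > 0" using e False by simp
    obtain K1 U1 where 1: "compact K1" "K1 \<subseteq> A" "open U1" "A \<subseteq> U1"
      "\<forall>C\<in>bbsets n. C \<subseteq> U1 - K1 \<longrightarrow> cmod (\<mu> C) < e / cmod c"
      using a A e' unfolding coarse_chain_def cm_regular_def by meson
    show "\<exists>K U. compact K \<and> K \<subseteq> A \<and> open U \<and> A \<subseteq> U \<and>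
        (\<forall>C\<in>bbsets n. C \<subseteq> U - K \<longrightarrow> cmod (c * \<mu> C) < e)"
    proof (intro exI conjI ballI impI)
      fix C assume C: "C \<in> bbsets n" "C \<subseteq> U1 - K1"
      have "cmod (\<mu> C) < e / cmod c" using 1 C by auto
      then show "cmod (c * \<mu> C) < e" using False by (simp add: norm_mult field_simps)
    qed (use 1 in auto)
  qed
  obtain R1 where R1: "vanishes_outside n \<mu> (diag_thick n R1)" using a coarse_chain_def by blast
  have "vanishes_outside n (\<lambda>A. c * \<mu> A) (diag_thick n R1)"
    using R1 unfolding vanishes_outside_def by auto
  with ca rg a show ?thesis unfolding coarse_chain_def by auto
qed

lemma cc_add:
  assumes a: "coarse_chain n \<mu>" and b: "coarse_chain n \<nu>"
  shows "coarse_chain n (\<lambda>A. \<mu> A + \<nu> A)"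
  using cc_diff[OF a cc_scale[OF b, of "-1"]] by simp

lemma cc_sum:
  assumes "finite I" "\<And>i. i \<in> I \<Longrightarrow> coarse_chain n (f i)"
  shows "coarse_chain n (\<lambda>A. \<Sum>i\<in>I. f i A)"
  using assms
proof (induction I rule: finite_induct)
  case empty then show ?case using cc_zero by simp
next
  case (insert x F)
  then show ?case using cc_add[of n "f x" "\<lambda>A. \<Sum>i\<in>F. f i A"] by simp
qed

lemma tup_PiE: "x \<in> tup n \<Longrightarrow> x \<in> PiE {..n} (\<lambda>_. Z) \<longleftrightarrow> (\<forall>i\<le>n. x i \<in> Z)"
  by (auto simp: tup_def PiE_def)

lemma PiE_tup: "PiE {..n} (\<lambda>_. Z) \<subseteq> tup n"
  by (auto simp: tup_def PiE_def)

lemma PiE_mono': "Z \<subseteq> W \<Longrightarrow> PiE {..n} (\<lambda>_. Z) \<subseteq> PiE {..n} (\<lambda>_. W)"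
  by (auto simp: PiE_def)

lemma PiE_Int': "PiE {..n} (\<lambda>_. Z) \<inter> PiE {..n} (\<lambda>_. W) = PiE {..n} (\<lambda>_. Z \<inter> W)"
  by (auto simp: PiE_def)

lemma bf_empty: "big_family F \<Longrightarrow> {} \<in> F"
  unfolding big_family_def by blast

lemma bf_subset: "big_family F \<Longrightarrow> X \<in> F \<Longrightarrow> Z \<subseteq> X \<Longrightarrow> Z \<in> F"
  unfolding big_family_def by blast

lemma bf_thick: "big_family F \<Longrightarrow> X \<in> F \<Longrightarrow> R \<ge> 0 \<Longrightarrow> thickening R X \<in> F"
  unfolding big_family_def by blast

lemma closure_sub_thick: "closure X \<subseteq> thickening 1 X"
proof
  fix x assume "x \<in> closure X"
  then have "\<forall>e>0. \<exists>y\<in>X. dist y x < e" by (simp only: closure_approachable)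
  then have "\<exists>y\<in>X. dist y x < 1" by (meson zero_less_one)
  then obtain y where "y \<in> X" "dist y x < 1" by blast
  then have "dist x y \<le> 1" by (simp add: dist_commute)
  then show "x \<in> thickening 1 X" unfolding thickening_def using \<open>y \<in> X\<close> by blast
qed

lemma bf_closure: assumes "big_family F" "X \<in> F" shows "closure X \<in> F"
proof -
  have "thickening 1 X \<in> F" using bf_thick[of F X 1] assms by simp
  then show ?thesis using bf_subset[OF assms(1) _ closure_sub_thick] by blast
qed

lemma CX_Int_sub:
  assumes "\<mu> \<in> CX n (fam_Int \<X> \<Y>)" and bX: "big_family \<X>" and bY: "big_family \<Y>"
  shows "\<mu> \<in> CX n \<X> \<and> \<mu> \<in> CX n \<Y>"
proof -
  obtain Z where Z: "coarse_chain n \<mu>" "Z \<in> fam_Int \<X> \<Y>" "vanishes_outside n \<mu> (PiE {..n} (\<lambda>_. Z))"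
    using assms(1) unfolding CX_def by blast
  then obtain X Y where "Z = X \<inter> Y" "X \<in> \<X>" "Y \<in> \<Y>" unfolding fam_Int_def by blast
  then have XY: "X \<in> \<X>" "Y \<in> \<Y>" "vanishes_outside n \<mu> (PiE {..n} (\<lambda>_. X \<inter> Y))"
    "coarse_chain n \<mu>" using Z by auto
  have "vanishes_outside n \<mu> (PiE {..n} (\<lambda>_. X))"
    by (rule vanish_mono[OF XY(3) PiE_mono']) auto
  moreover have "vanishes_outside n \<mu> (PiE {..n} (\<lambda>_. Y))"
    by (rule vanish_mono[OF XY(3) PiE_mono']) auto
  ultimately show ?thesis using XY unfolding CX_def by blast
qed

lemma CX_diff_Un:
  assumes "\<mu>1 \<in> CX n \<X>" "\<mu>2 \<in> CX n \<Y>"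
  shows "(\<lambda>A. \<mu>1 A - \<mu>2 A) \<in> CX n (fam_Un \<X> \<Y>)"
proof -
  obtain X where X: "X \<in> \<X>" "vanishes_outside n \<mu>1 (PiE {..n} (\<lambda>_. X))" "coarse_chain n \<mu>1"
    using assms(1) unfolding CX_def by blast
  obtain Y where Y: "Y \<in> \<Y>" "vanishes_outside n \<mu>2 (PiE {..n} (\<lambda>_. Y))" "coarse_chain n \<mu>2"
    using assms(2) unfolding CX_def by blast
  have 1: "vanishes_outside n \<mu>1 (PiE {..n} (\<lambda>_. X \<union> Y))"
    by (rule vanish_mono[OF X(2) PiE_mono']) auto
  have 2: "vanishes_outside n \<mu>2 (PiE {..n} (\<lambda>_. X \<union> Y))"
    by (rule vanish_mono[OF Y(2) PiE_mono']) auto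
  have "vanishes_outside n (\<lambda>A. \<mu>1 A - \<mu>2 A) (PiE {..n} (\<lambda>_. X \<union> Y))"
    using 1 2 unfolding vanishes_outside_def by auto
  moreover have "X \<union> Y \<in> fam_Un \<X> \<Y>" using X Y unfolding fam_Un_def by blast
  ultimately show ?thesis using cc_diff[OF X(3) Y(3)] unfolding CX_def by blast
qed

lemma CX_both_Int:
  assumes "\<mu> \<in> CX n \<X>" "\<mu> \<in> CX n \<Y>" and bX: "big_family \<X>" and bY: "big_family \<Y>"
  shows "\<mu> \<in> CX n (fam_Int \<X> \<Y>)"
proof -
  obtain X where X: "X \<in> \<X>" "vanishes_outside n \<mu> (PiE {..n} (\<lambda>_. X))" "coarse_chain n \<mu>"
    using assms(1) unfolding CX_def by blast
  obtain Y where Y: "Y \<in> \<Y>" "vanishes_outside n \<mu> (PiE {..n} (\<lambda>_. Y))"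
    using assms(2) unfolding CX_def by blast
  have 1: "vanishes_outside n \<mu> (PiE {..n} (\<lambda>_. closure X))"
    by (rule vanish_mono[OF X(2) PiE_mono']) (rule closure_subset)
  have 2: "vanishes_outside n \<mu> (PiE {..n} (\<lambda>_. closure Y))"
    by (rule vanish_mono[OF Y(2) PiE_mono']) (rule closure_subset)
  have "vanishes_outside n \<mu> (PiE {..n} (\<lambda>_. closure X) \<inter> PiE {..n} (\<lambda>_. closure Y))"
    by (rule vanish_split[OF X(3) tborel_PiE_closed 1 2 tborel_PiE_closed]) auto
  then have "vanishes_outside n \<mu> (PiE {..n} (\<lambda>_. closure X \<inter> closure Y))"
    by (simp add: PiE_Int')
  moreover have "closure X \<inter> closure Y \<in> fam_Int \<X> \<Y>"
    using bf_closure[OF bX X(1)] bf_closure[OF bY Y(1)] unfolding fam_Int_def by blast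
  ultimately show ?thesis using X(3) unfolding CX_def by blast
qed

lemma CX_decomp:
  fixes \<X> \<Y> :: "'a::metric_space set set"
  assumes bX: "big_family \<X>" and bY: "big_family \<Y>" and nu: "\<nu> \<in> CX n (fam_Un \<X> \<Y>)"
  shows "\<exists>\<mu>1\<in>CX n \<X>. \<exists>\<mu>2\<in>CX n \<Y>. \<nu> = (\<lambda>A. \<mu>1 A - \<mu>2 A)"
proof -
  obtain Z where Z: "coarse_chain n \<nu>" "Z \<in> fam_Un \<X> \<Y>" "vanishes_outside n \<nu> (PiE {..n} (\<lambda>_. Z))"
    using nu unfolding CX_def by blast
  then obtain X Y where "Z = X \<union> Y" "X \<in> \<X>" "Y \<in> \<Y>" unfolding fam_Un_def by blast
  then have X: "X \<in> \<X>" and Y: "Y \<in> \<Y>" and vXY: "vanishes_outside n \<nu> (PiE {..n} (\<lambda>_. X \<union> Y))"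
    using Z by auto
  have cc: "coarse_chain n \<nu>" by fact
  obtain R0 where R0: "vanishes_outside n \<nu> (diag_thick n R0)" using cc coarse_chain_def by blast
  define R where "R = max R0 0"
  have R: "vanishes_outside n \<nu> (diag_thick n R)"
    using vanish_mono[OF R0 diag_thick_mono[of R0 R]] by (simp add: R_def)
  have R_ge: "R \<ge> 0" by (simp add: R_def)
  define Xc where "Xc = closure (thickening (2 * R + 1) X)"
  have "thickening (2 * R + 1) X \<in> \<X>" using bf_thick[OF bX X, of "2 * R + 1"] R_ge by simp
  then have Xc: "Xc \<in> \<X>" unfolding Xc_def by (rule bf_closure[OF bX])
  define X1 where "X1 = closure X"
  define Y1 where "Y1 = closure Y"
  have Y1: "Y1 \<in> \<Y>" unfolding Y1_def using bf_closure[OF bY Y] .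
  define S where "S = PiE {..n} (\<lambda>_. Xc)"
  have S: "S \<in> tborel n" unfolding S_def Xc_def by (rule tborel_PiE_closed) simp
  define \<mu>1 where "\<mu>1 = (\<lambda>A. if A \<in> bbsets n then \<nu> (A \<inter> S) else 0)"
  have ca: "cm_countably_additive n \<mu>1"
    unfolding cm_countably_additive_def
  proof (intro allI impI)
    fix A :: "nat \<Rightarrow> (nat \<Rightarrow> 'a) set"
    assume A: "\<forall>k. A k \<in> bbsets n" "disjoint_family A" "(\<Union>k. A k) \<in> bbsets n"
    have 1: "\<forall>k. A k \<inter> S \<in> bbsets n" using A(1) bbsets_Int S by blast
    have 2: "disjoint_family (\<lambda>k. A k \<inter> S)" using A(2) unfolding disjoint_family_on_def by blast
    have UI: "(\<Union>k. A k) \<inter> S = (\<Union>k. A k \<inter> S)" by blast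
    have 3: "(\<Union>k. A k \<inter> S) \<in> bbsets n" using bbsets_Int[OF A(3) S] by (simp only: UI)
    have "(\<lambda>k. \<nu> (A k \<inter> S)) sums \<nu> (\<Union>k. A k \<inter> S)"
      using cc[unfolded coarse_chain_def, THEN conjunct2, THEN conjunct1, unfolded cm_countably_additive_def,
          THEN spec[of _ "\<lambda>k. A k \<inter> S"]] 1 2 3 by blast
    moreover have e1: "\<mu>1 (\<Union>k. A k) = \<nu> ((\<Union>k. A k) \<inter> S)" using A(3) by (simp only: \<mu>1_def if_True)
    moreover have e2: "(\<lambda>k. \<mu>1 (A k)) = (\<lambda>k. \<nu> (A k \<inter> S))" using A(1) by (simp add: \<mu>1_def)
    ultimately show "(\<lambda>k. \<mu>1 (A k)) sums \<mu>1 (\<Union>k. A k)"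
      by (simp only: e1 e2 UI)
  qed
  have rg: "cm_regular n \<mu>1"
    unfolding cm_regular_def
  proof (intro ballI allI impI)
    fix A :: "(nat \<Rightarrow> 'a) set" and e :: real assume A: "A \<in> bbsets n" and e: "0 < e"
    obtain K U where KU: "compact K" "K \<subseteq> A" "open U" "A \<subseteq> U"
      "\<forall>C\<in>bbsets n. C \<subseteq> U - K \<longrightarrow> cmod (\<nu> C) < e"
      using cc A e unfolding coarse_chain_def cm_regular_def by meson
    show "\<exists>K U. compact K \<and> K \<subseteq> A \<and> open U \<and> A \<subseteq> U \<and>
        (\<forall>C\<in>bbsets n. C \<subseteq> U - K \<longrightarrow> cmod (\<mu>1 C) < e)"
    proof (intro exI conjI ballI impI)
      fix C :: "(nat \<Rightarrow> 'a) set" assume C: "C \<in> bbsets n" "C \<subseteq> U - K"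
      then have "C \<inter> S \<in> bbsets n" "C \<inter> S \<subseteq> U - K" using bbsets_Int S by auto
      then show "cmod (\<mu>1 C) < e" using KU C by (simp add: \<mu>1_def)
    qed (use KU in auto)
  qed
  have vR1: "vanishes_outside n \<mu>1 (diag_thick n R)"
    unfolding vanishes_outside_def
  proof (intro ballI impI)
    fix C :: "(nat \<Rightarrow> 'a) set" assume C: "C \<in> bbsets n" "C \<inter> diag_thick n R = {}"
    then have "C \<inter> S \<in> bbsets n" "(C \<inter> S) \<inter> diag_thick n R = {}" using bbsets_Int S by auto
    then have "\<nu> (C \<inter> S) = 0" using R unfolding vanishes_outside_def by blast
    then show "\<mu>1 C = 0" using C by (simp add: \<mu>1_def)
  qed
  have z1: "\<forall>A. A \<notin> bbsets n \<longrightarrow> \<mu>1 A = 0" by (simp add: \<mu>1_def)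
  have cc1: "coarse_chain n \<mu>1"
    unfolding coarse_chain_def using z1 ca rg vR1 by blast
  have "\<nu> {} = 0" using cc_empty[OF cc] .
  then have vS: "vanishes_outside n \<mu>1 S"
    unfolding vanishes_outside_def \<mu>1_def by (auto simp: Int_commute)
  have vS': "vanishes_outside n \<mu>1 (PiE {..n} (\<lambda>_. Xc))" using vS by (simp add: S_def)
  have m1: "\<mu>1 \<in> CX n \<X>" unfolding CX_def using cc1 vS' Xc by blast
  define \<mu>2 where "\<mu>2 = (\<lambda>A. \<mu>1 A - \<nu> A)"
  have cc2: "coarse_chain n \<mu>2" unfolding \<mu>2_def by (rule cc_diff[OF cc1 cc])
  define P where "P = PiE {..n} (\<lambda>_. X1 \<union> Y1)"
  have P: "P \<in> tborel n" unfolding P_def X1_def Y1_def by (rule tborel_PiE_closed) (intro closed_Un closed_closure)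
  have vP: "vanishes_outside n \<nu> P"
    unfolding P_def X1_def Y1_def
    by (rule vanish_mono[OF vXY PiE_mono']) (use closure_subset in blast)
  have vY1: "vanishes_outside n \<mu>2 (PiE {..n} (\<lambda>_. Y1))"
    unfolding vanishes_outside_def
  proof (intro ballI impI)
    fix C :: "(nat \<Rightarrow> 'a) set" assume C: "C \<in> bbsets n" and dC: "C \<inter> PiE {..n} (\<lambda>_. Y1) = {}"
    have CS: "C - S \<in> bbsets n" using bbsets_Diff[OF C S] .
    have e1: "\<nu> C = \<nu> (C \<inter> S) + \<nu> (C - S)" by (rule cc_add2[OF cc C S])
    have e2: "\<nu> (C - S) = \<nu> ((C - S) \<inter> P) + \<nu> ((C - S) - P)" by (rule cc_add2[OF cc CS P])
    have z1: "\<nu> ((C - S) - P) = 0"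
      using vP bbsets_Diff[OF CS P] unfolding vanishes_outside_def by blast
    have disj: "(C - S) \<inter> P \<inter> diag_thick n R = {}"
    proof (rule ccontr)
      assume "(C - S) \<inter> P \<inter> diag_thick n R \<noteq> {}"
      then obtain x where x: "x \<in> C" "x \<notin> S" "x \<in> P" "x \<in> diag_thick n R" by blast
      have xt: "x \<in> tup n" using x(1) bbsets_sub[OF C] by blast
      have "x \<notin> PiE {..n} (\<lambda>_. Y1)" using dC x(1) by blast
      then obtain i where i: "i \<le> n" "x i \<notin> Y1" using tup_PiE[OF xt] by blast
      have "x i \<in> X1 \<union> Y1" using x(3) i(1) tup_PiE[OF xt] unfolding P_def by blast
      then have xi: "x i \<in> closure X" using i(2) X1_def by blast
      obtain j where j: "j \<le> n" "x j \<notin> Xc" using x(2) tup_PiE[OF xt] unfolding S_def by blast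
      obtain m where m: "\<forall>k\<le>n. dist (x k) m \<le> R" using x(4) unfolding diag_thick_def by blast
      have "\<forall>e>0. \<exists>y\<in>X. dist y (x i) < e" using xi by (simp only: closure_approachable)
      then have "\<exists>y\<in>X. dist y (x i) < 1" by (meson zero_less_one)
      then obtain y where y: "y \<in> X" "dist y (x i) < 1" by blast
      have t1: "dist (x j) y \<le> dist (x j) m + dist m y" by (rule dist_triangle)
      have t2: "dist m y \<le> dist m (x i) + dist (x i) y" by (rule dist_triangle)
      have b1: "dist (x j) m \<le> R" using m j(1) by blast
      have b2: "dist m (x i) \<le> R" using m i(1) dist_commute by metis
      have b3: "dist (x i) y < 1" using y(2) dist_commute by metis
      have "dist (x j) y \<le> 2 * R + 1" using t1 t2 b1 b2 b3 by linarith
      then have "x j \<in> thickening (2 * R + 1) X" unfolding thickening_def using y(1) by blast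
      then have "x j \<in> Xc" unfolding Xc_def using closure_subset by blast
      with j(2) show False by blast
    qed
    have z2: "\<nu> ((C - S) \<inter> P) = 0"
      using R bbsets_Int[OF CS P] disj unfolding vanishes_outside_def by blast
    show "\<mu>2 C = 0" using e1 e2 z1 z2 C by (simp add: \<mu>2_def \<mu>1_def)
  qed
  have m2: "\<mu>2 \<in> CX n \<Y>" unfolding CX_def using cc2 vY1 Y1 by blast
  have "\<nu> = (\<lambda>A. \<mu>1 A - \<mu>2 A)" by (simp add: \<mu>2_def)
  with m1 m2 show ?thesis by blast
qed

lemma proper_dense:
  assumes proper: "\<forall>(x::'a::metric_space) r. compact (cball x r)"
  shows "\<exists>D::'a set. countable D \<and> (\<forall>a e. e > 0 \<longrightarrow> (\<exists>d\<in>D. dist a d < e))"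
proof -
  define x0 :: 'a where "x0 = undefined"
  have ex: "\<forall>k::nat. \<forall>m::nat. \<exists>F. finite F \<and> cball x0 (real k) \<subseteq> (\<Union>c\<in>F. ball c (1 / Suc m))"
  proof (intro allI)
    fix k m :: nat
    have "cball x0 (real k) \<subseteq> (\<Union>c\<in>cball x0 (real k). ball c (1 / Suc m))"
    proof
      fix y assume "y \<in> cball x0 (real k)"
      moreover have "y \<in> ball y (1 / Suc m)" by simp
      ultimately show "y \<in> (\<Union>c\<in>cball x0 (real k). ball c (1 / Suc m))" by blast
    qed
    then obtain F where "F \<subseteq> cball x0 (real k)" "finite F" "cball x0 (real k) \<subseteq> (\<Union>c\<in>F. ball c (1 / Suc m))"
      using compactE_image[of "cball x0 (real k)" "cball x0 (real k)" "\<lambda>c. ball c (1 / Suc m)"] proper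
      by blast
    then show "\<exists>F. finite F \<and> cball x0 (real k) \<subseteq> (\<Union>c\<in>F. ball c (1 / Suc m))" by blast
  qed
  define Fs where "Fs = (\<lambda>k m. SOME F. finite F \<and> cball x0 (real k) \<subseteq> (\<Union>c\<in>F. ball c (1 / Suc m)))"
  have Fs: "finite (Fs k m) \<and> cball x0 (real k) \<subseteq> (\<Union>c\<in>Fs k m. ball c (1 / Suc m))" for k m
    unfolding Fs_def by (rule someI_ex) (use ex in blast)
  define D where "D = (\<Union>k. \<Union>m. Fs k m)"
  have fin: "finite (Fs k m)" for k m using Fs by blast
  have "countable D" unfolding D_def by (simp add: countable_finite fin)
  moreover have "\<forall>a e. e > 0 \<longrightarrow> (\<exists>d\<in>D. dist a d < e)"
  proof (intro allI impI)
    fix a :: 'a and e :: real assume e: "e > 0"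
    obtain N :: nat where N: "N \<noteq> 0" "inverse (real N) < e" using real_arch_inverse e by blast
    define m where "m = N - 1"
    have m: "1 / real (Suc m) < e" using N by (simp add: m_def divide_inverse)
    define k where "k = nat \<lceil>dist x0 a\<rceil>"
    have "a \<in> cball x0 (real k)" unfolding k_def using real_nat_ceiling_ge by (simp add: mem_cball)
    then obtain c where c: "c \<in> Fs k m" "a \<in> ball c (1 / Suc m)" using Fs by blast
    have "dist a c < e" using c(2) m by (simp add: dist_commute)
    moreover have "c \<in> D" unfolding D_def using c(1) by blast
    ultimately show "\<exists>d\<in>D. dist a d < e" by blast
  qed
  ultimately show ?thesis by blast
qed

lemma comp_meas: "i \<le> n \<Longrightarrow> B \<in> sets borel \<Longrightarrow> {x \<in> tup n. x i \<in> B} \<in> tborel n"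
proof -
  assume i: "i \<le> n" and B: "B \<in> sets borel"
  have "(\<lambda>x::nat \<Rightarrow> 'a. x i) -` B \<inter> space (PiM {..n} (\<lambda>_. borel)) \<in> sets (PiM {..n} (\<lambda>_. borel))"
    by (rule measurable_sets[OF measurable_component_singleton[of i "{..n}" "\<lambda>_. borel"] B]) (use i in simp)
  moreover have "(\<lambda>x::nat \<Rightarrow> 'a. x i) -` B \<inter> space (PiM {..n} (\<lambda>_. borel)) = {x \<in> tup n. x i \<in> B}"
    by (auto simp: space_tb)
  ultimately show ?thesis unfolding tborel_def by simp
qed

lemma pair_thick_meas:
  fixes S :: real
  assumes proper: "\<forall>(x::'a::metric_space) r. compact (cball x r)"
  shows "(pair_thick n S :: (nat \<Rightarrow> 'a) set) \<in> tborel n"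
proof -
  obtain D :: "'a set" where D: "countable D" "\<And>a e. e > 0 \<Longrightarrow> (\<exists>d\<in>D. dist a d < e)"
    using proper_dense[OF proper] by blast
  define Q where "Q = (\<lambda>(i::nat, j::nat). {x \<in> (tup n :: (nat \<Rightarrow> 'a) set). dist (x i) (x j) \<le> S})"
  define W where "W = (\<lambda>i j (d::'a, t::real). {x \<in> (tup n :: (nat \<Rightarrow> 'a) set). x i \<in> ball d t} \<inter>
                          {x \<in> tup n. x j \<in> - cball d (S + t)})"
  have Qeq: "Q (i, j) = tup n - (\<Union>p\<in>D \<times> \<rat>. W i j p)" for i j
  proof
    show "Q (i, j) \<subseteq> tup n - (\<Union>p\<in>D \<times> \<rat>. W i j p)"
    proof
      fix x assume x: "x \<in> Q (i, j)"
      have "x \<notin> W i j (d, t)" for d t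
      proof
        assume "x \<in> W i j (d, t)"
        then have 1: "dist d (x i) < t" "\<not> dist d (x j) \<le> S + t" unfolding W_def by auto
        have "dist d (x j) \<le> dist d (x i) + dist (x i) (x j)" by (rule dist_triangle)
        moreover have "dist (x i) (x j) \<le> S" using x unfolding Q_def by auto
        ultimately show False using 1 by linarith
      qed
      then show "x \<in> tup n - (\<Union>p\<in>D \<times> \<rat>. W i j p)" using x unfolding Q_def by auto
    qed
  next
    show "tup n - (\<Union>p\<in>D \<times> \<rat>. W i j p) \<subseteq> Q (i, j)"
    proof
      fix x assume x: "x \<in> tup n - (\<Union>p\<in>D \<times> \<rat>. W i j p)"
      show "x \<in> Q (i, j)"
      proof (rule ccontr)
        assume "x \<notin> Q (i, j)"
        then have gt: "dist (x i) (x j) > S" using x unfolding Q_def by auto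
        define \<delta> where "\<delta> = (dist (x i) (x j) - S) / 3"
        have dpos: "\<delta> > 0" using gt by (simp add: \<delta>_def)
        obtain d where d: "d \<in> D" "dist (x i) d < \<delta>" using D(2)[OF dpos] by blast
        obtain t where t: "t \<in> \<rat>" "dist d (x i) < t" "t < \<delta>"
          using Rats_dense_in_real[of "dist d (x i)" \<delta>] d(2) by (auto simp: dist_commute)
        have "dist (x i) (x j) \<le> dist (x i) d + dist d (x j)" by (rule dist_triangle)
        then have "dist d (x j) \<ge> dist (x i) (x j) - dist d (x i)" by (simp add: dist_commute)
        moreover have "0 \<le> dist d (x i)" by simp
        moreover have "3 * t < dist (x i) (x j) - S" using t(3) unfolding \<delta>_def by simp
        ultimately have "dist d (x j) > S + t" using t(2) by linarith
        then have "x \<in> W i j (d, t)" unfolding W_def using x t(2) by (auto simp: dist_commute)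
        moreover have "(d, t) \<in> D \<times> \<rat>" using d(1) t(1) by blast
        ultimately show False using x by blast
      qed
    qed
  qed
  have Wm: "W i j p \<in> tborel n" if "i \<le> n" "j \<le> n" for i j p
  proof -
    obtain d t where p: "p = (d, t)" by (cases p)
    have "W i j p = {x \<in> tup n. x i \<in> ball d t} \<inter> {x \<in> tup n. x j \<in> - cball d (S + t)}"
      unfolding p W_def by simp
    then show ?thesis
      by (simp only:) (intro tborel_Int comp_meas that borel_open open_ball open_Compl closed_cball)
  qed
  have Qm: "Q (i, j) \<in> tborel n" if "i \<le> n" "j \<le> n" for i j
  proof -
    have "countable (D \<times> \<rat>)" using D(1) countable_rat by blast
    then have "(\<Union>p\<in>D \<times> \<rat>. W i j p) \<in> tborel n"
      unfolding tborel_def using Wm[OF that] unfolding tborel_def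
      by (intro sets.countable_UN'') auto
    then show ?thesis unfolding Qeq by (intro tborel_Diff tborel_tup)
  qed
  have "pair_thick n S = tup n \<inter> (\<Inter>p\<in>{..n} \<times> {..n}. Q p)"
    unfolding pair_thick_def Q_def by auto
  moreover have "(\<Inter>p\<in>{..n} \<times> {..n}. Q p) \<in> tborel n"
    unfolding tborel_def
    by (rule sets.finite_INT) (use Qm in \<open>auto simp: tborel_def\<close>)
  ultimately show ?thesis using tborel_Int tborel_tup by metis
qed

lemma tbounded_pt:
  fixes A :: "(nat \<Rightarrow> 'a::metric_space) set"
  assumes "A \<subseteq> tup n" "\<And>y i. y \<in> A \<Longrightarrow> i \<le> n \<Longrightarrow> dist (y i) p \<le> r"
  shows "tbounded n A"
proof -
  define x where "x = (\<lambda>i. if i \<le> n then p else undefined)"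
  have x: "x \<in> tup n" unfolding x_def tup_def by (auto simp: PiE_def extensional_def)
  have "tdist n x y \<le> r" if "y \<in> A" for y
    unfolding tdist_def using assms(2)[OF that] by (simp add: x_def dist_commute)
  then show ?thesis unfolding tbounded_def using assms(1) x by blast
qed

lemma tbounded_ptE:
  fixes A :: "(nat \<Rightarrow> 'a::metric_space) set"
  assumes "tbounded n A"
  obtains p r where "\<And>y i. y \<in> A \<Longrightarrow> i \<le> n \<Longrightarrow> dist (y i) p \<le> r"
proof -
  obtain x r where x: "x \<in> tup n" "\<forall>y\<in>A. tdist n x y \<le> r" using assms unfolding tbounded_def by blast
  define s where "s = (\<Sum>k\<le>n. dist (x k) (x 0))"
  have "dist (y i) (x 0) \<le> r + s" if y: "y \<in> A" and i: "i \<le> n" for y i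
  proof -
    have "dist (x i) (y i) \<le> tdist n x y" unfolding tdist_def using i by simp
    moreover have "tdist n x y \<le> r" using x(2) y by blast
    ultimately have 1: "dist (y i) (x i) \<le> r" by (simp add: dist_commute)
    have 2: "dist (x i) (x 0) \<le> s" unfolding s_def
      by (rule member_le_sum[where f = "\<lambda>k. dist (x k) (x 0)"]) (use i in auto)
    have "dist (y i) (x 0) \<le> dist (y i) (x i) + dist (x i) (x 0)" by (rule dist_triangle)
    then show ?thesis using 1 2 by linarith
  qed
  then show ?thesis using that by blast
qed

lemma face_comp: "j < n \<Longrightarrow> face n i x j = x (if j < i then j else Suc j)"
  by (simp add: face_def)

lemma face_meas:
  assumes n: "0 < n" and B: "B \<in> tborel (n - 1)"
  shows "face n i -` B \<inter> tup n \<in> (tborel n :: (nat \<Rightarrow> 'a::metric_space) set set)"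
proof -
  have eq: "face n i = (\<lambda>x j. (\<lambda>j x. face n i x j) j x)" by simp
  have m: "face n i \<in> measurable (PiM {..n} (\<lambda>_. borel)) (PiM {..n-1} (\<lambda>_::nat. (borel :: 'a measure)))"
    apply (subst eq)
  proof (rule measurable_PiM_single')
    fix j assume j: "j \<in> {..n-1}"
    then have "j < n" using n by auto
    then have "(\<lambda>x::nat \<Rightarrow> 'a. face n i x j) = (\<lambda>x. x (if j < i then j else Suc j))"
      by (simp add: face_def)
    moreover have "(\<lambda>x::nat \<Rightarrow> 'a. x (if j < i then j else Suc j)) \<in> measurable (PiM {..n} (\<lambda>_. borel)) borel"
      by (rule measurable_component_singleton) (use \<open>j < n\<close> in auto)
    ultimately show "(\<lambda>x::nat \<Rightarrow> 'a. face n i x j) \<in> measurable (PiM {..n} (\<lambda>_. borel)) borel" by simp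
  next
    show "(\<lambda>x j. face n i x j) \<in> space (PiM {..n} (\<lambda>_. borel)) \<rightarrow> (\<Pi>\<^sub>E j\<in>{..n - 1}. space (borel :: 'a measure))"
      using n by (auto simp: face_def PiE_def extensional_def)
  qed
  have "face n i -` B \<inter> space (PiM {..n} (\<lambda>_. borel)) \<in> sets (PiM {..n} (\<lambda>_. (borel :: 'a measure)))"
    by (rule measurable_sets[OF m]) (use B in \<open>simp add: tborel_def\<close>)
  then show ?thesis by (simp add: tborel_def space_tb)
qed

definition GG :: "nat \<Rightarrow> nat \<Rightarrow> (nat \<Rightarrow> 'a::metric_space) set \<Rightarrow> real \<Rightarrow> (nat \<Rightarrow> 'a) set" where
  "GG n i B R = face n i -` B \<inter> pair_thick n (2 * R)"

lemma pair_thick_sub: "pair_thick n S \<subseteq> tup n"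
  unfolding pair_thick_def by auto

lemma GG_bb:
  fixes B :: "(nat \<Rightarrow> 'a::metric_space) set"
  assumes proper: "\<forall>(x::'a) r. compact (cball x r)"
    and n: "0 < n" and i: "i \<le> n" and B: "B \<in> bbsets (n - 1)"
  shows "GG n i B R \<in> bbsets n"
proof -
  have Bt: "B \<in> tborel (n - 1)" and Bb: "tbounded (n - 1) B" using B by (auto simp: bbsets_def)
  have eq: "GG n i B R = (face n i -` B \<inter> tup n) \<inter> pair_thick n (2 * R)"
    unfolding GG_def using pair_thick_sub by blast
  have meas: "GG n i B R \<in> tborel n"
    unfolding eq by (intro tborel_Int face_meas[OF n Bt] pair_thick_meas[OF proper])
  obtain p r where pr: "\<And>y j. y \<in> B \<Longrightarrow> j \<le> n - 1 \<Longrightarrow> dist (y j) p \<le> r"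
    using tbounded_ptE[OF Bb] by blast
  have bd: "dist (x k) p \<le> r + 2 * R" if x: "x \<in> GG n i B R" and k: "k \<le> n" for x k
  proof -
    have xB: "face n i x \<in> B" and xp: "x \<in> pair_thick n (2 * R)" using x unfolding GG_def by auto
    have other: "dist (x k') p \<le> r" if k': "k' \<le> n" "k' \<noteq> i" for k'
    proof (cases "k' < i")
      case True
      then have "face n i x k' = x k'" using i by (simp add: face_def)
      then show ?thesis using pr[OF xB, of k'] True i by simp
    next
      case False
      have j: "k' - 1 < n" "\<not> k' - 1 < i" "Suc (k' - 1) = k'" using False k' by auto
      have "face n i x (k' - 1) = x (if k' - 1 < i then k' - 1 else Suc (k' - 1))" by (rule face_comp[OF j(1)])
      then have "face n i x (k' - 1) = x k'" using j(2,3) by simp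
      then show ?thesis using pr[OF xB, of "k' - 1"] k' by simp
    qed
    have rpos: "0 \<le> r" using pr[OF xB, of 0] zero_le_dist[of "face n i x 0" p] by linarith
    show ?thesis
    proof (cases "k = i")
      case False
      have "dist (x k) (x k) \<le> 2 * R" using xp k unfolding pair_thick_def by blast
      then have "0 \<le> 2 * R" by simp
      then show ?thesis using other[OF k False] by linarith
    next
      case True
      define k' :: nat where "k' = (if i = 0 then 1 else 0)"
      have k': "k' \<le> n" "k' \<noteq> i" using n i by (auto simp: k'_def)
      have "dist (x i) (x k') \<le> 2 * R" using xp k' i unfolding pair_thick_def by blast
      moreover have "dist (x i) p \<le> dist (x i) (x k') + dist (x k') p" by (rule dist_triangle)
      ultimately have "dist (x i) p \<le> r + 2 * R" using other[OF k'] by linarith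
      then show ?thesis using True by simp
    qed
  qed
  have "tbounded n (GG n i B R)"
    by (rule tbounded_pt[where p = p and r = "r + 2 * R"]) (use meas tborel_sub bd in auto)
  then show ?thesis using meas by (simp add: bbsets_def)
qed

lemma diag_pair: "(diag_thick n R :: (nat \<Rightarrow> 'a::metric_space) set) \<subseteq> pair_thick n (2 * R)"
proof
  fix x :: "nat \<Rightarrow> 'a" assume "x \<in> diag_thick n R"
  then obtain m where x: "x \<in> tup n" "\<forall>i\<le>n. dist (x i) m \<le> R" unfolding diag_thick_def by blast
  have "dist (x i) (x j) \<le> 2 * R" if "i \<le> n" "j \<le> n" for i j
  proof -
    have a: "dist (x i) (x j) \<le> dist (x i) m + dist m (x j)" by (rule dist_triangle)
    have b: "dist (x i) m \<le> R" using x(2) that(1) by blast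
    have c: "dist m (x j) \<le> R" using x(2) that(2) dist_commute by metis
    show ?thesis using a b c by linarith
  qed
  then show "x \<in> pair_thick n (2 * R)" using x(1) unfolding pair_thick_def by blast
qed

lemma pair_thick_mono: "S \<le> S' \<Longrightarrow> pair_thick n S \<subseteq> pair_thick n S'"
  unfolding pair_thick_def by force

lemma pf_indep:
  fixes \<mu> :: "(nat \<Rightarrow> 'a::metric_space) set \<Rightarrow> complex"
  assumes proper: "\<forall>(x::'a) r. compact (cball x r)"
    and cc: "coarse_chain n \<mu>" and n: "0 < n" and i: "i \<le> n" and B: "B \<in> bbsets (n - 1)"
    and v0: "vanishes_outside n \<mu> (diag_thick n R0)" and R: "R0 \<le> R"
  shows "\<mu> (GG n i B R) = \<mu> (GG n i B R0)"
proof -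
  have b1: "GG n i B R \<in> bbsets n" and b0: "GG n i B R0 \<in> bbsets n"
    using GG_bb[OF proper n i B] by auto
  have t0: "GG n i B R0 \<in> tborel n" using b0 by (simp add: bbsets_def)
  have sub: "GG n i B R0 \<subseteq> GG n i B R"
    unfolding GG_def using pair_thick_mono[of "2 * R0" "2 * R" n] R by auto
  have "\<mu> (GG n i B R) = \<mu> (GG n i B R \<inter> GG n i B R0) + \<mu> (GG n i B R - GG n i B R0)"
    by (rule cc_add2[OF cc b1 t0])
  moreover have "GG n i B R \<inter> GG n i B R0 = GG n i B R0" using sub by blast
  moreover have "(GG n i B R - GG n i B R0) \<inter> diag_thick n R0 = {}"
    using diag_pair[of n R0] unfolding GG_def by blast
  then have "\<mu> (GG n i B R - GG n i B R0) = 0"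
    using v0 bbsets_Diff[OF b1 t0] unfolding vanishes_outside_def by blast
  ultimately show ?thesis by simp
qed

lemma pf_eq:
  fixes \<mu> :: "(nat \<Rightarrow> 'a::metric_space) set \<Rightarrow> complex"
  assumes proper: "\<forall>(x::'a) r. compact (cball x r)"
    and cc: "coarse_chain n \<mu>" and n: "0 < n" and i: "i \<le> n"
    and v: "vanishes_outside n \<mu> (diag_thick n R)"
  shows "push_face n i \<mu> B = (if B \<in> bbsets (n - 1) then \<mu> (GG n i B R) else 0)"
proof (cases "B \<in> bbsets (n - 1)")
  case False then show ?thesis by (simp add: push_face_def)
next
  case True
  define Rs where "Rs = (SOME R. vanishes_outside n \<mu> (diag_thick n R))"
  have vs: "vanishes_outside n \<mu> (diag_thick n Rs)" unfolding Rs_def by (rule someI[of _ R]) (rule v)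
  define Rm where "Rm = max R Rs"
  have "\<mu> (GG n i B Rm) = \<mu> (GG n i B Rs)" by (rule pf_indep[OF proper cc n i True vs]) (simp add: Rm_def)
  moreover have "\<mu> (GG n i B Rm) = \<mu> (GG n i B R)" by (rule pf_indep[OF proper cc n i True v]) (simp add: Rm_def)
  ultimately show ?thesis using True by (simp add: push_face_def GG_def Rs_def)
qed

lemma bdry_diff:
  fixes \<mu>1 \<mu>2 :: "(nat \<Rightarrow> 'a::metric_space) set \<Rightarrow> complex"
  assumes proper: "\<forall>(x::'a) r. compact (cball x r)"
    and c1: "coarse_chain n \<mu>1" and c2: "coarse_chain n \<mu>2" and n: "0 < n"
  shows "bdry n (\<lambda>A. \<mu>1 A - \<mu>2 A) = (\<lambda>B. bdry n \<mu>1 B - bdry n \<mu>2 B)"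
proof -
  obtain R1 where R1: "vanishes_outside n \<mu>1 (diag_thick n R1)" using c1 coarse_chain_def by blast
  obtain R2 where R2: "vanishes_outside n \<mu>2 (diag_thick n R2)" using c2 coarse_chain_def by blast
  define R where "R = max R1 R2"
  have v1: "vanishes_outside n \<mu>1 (diag_thick n R)"
    using vanish_mono[OF R1 diag_thick_mono[of R1 R]] by (simp add: R_def)
  have v2: "vanishes_outside n \<mu>2 (diag_thick n R)"
    using vanish_mono[OF R2 diag_thick_mono[of R2 R]] by (simp add: R_def)
  have vd: "vanishes_outside n (\<lambda>A. \<mu>1 A - \<mu>2 A) (diag_thick n R)"
    using v1 v2 unfolding vanishes_outside_def by auto
  have cd: "coarse_chain n (\<lambda>A. \<mu>1 A - \<mu>2 A)" by (rule cc_diff[OF c1 c2])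
  have pf: "push_face n i (\<lambda>A. \<mu>1 A - \<mu>2 A) B = push_face n i \<mu>1 B - push_face n i \<mu>2 B"
    if i: "i \<le> n" for i B
    using pf_eq[OF proper cd n i vd, of B] pf_eq[OF proper c1 n i v1, of B] pf_eq[OF proper c2 n i v2, of B]
    by simp
  show ?thesis
    unfolding bdry_def by (rule ext) (simp add: pf right_diff_distrib sum_subtractf)
qed

lemma perm_tup:
  assumes s: "\<sigma> permutes {..n}" and x: "x \<in> tup n"
  shows "x \<circ> \<sigma> \<in> tup n"
proof -
  have "(x \<circ> \<sigma>) i = undefined" if "i \<notin> {..n}" for i
    using x that permutes_not_in[OF s that] by (auto simp: tup_def PiE_def extensional_def)
  then show ?thesis unfolding tup_def by (auto simp: PiE_def extensional_def)
qed

lemma perm_inv_cancel: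
  assumes s: "\<sigma> permutes {..n}"
  shows "x \<circ> \<sigma> \<circ> inv \<sigma> = x" "x \<circ> inv \<sigma> \<circ> \<sigma> = x"
  using permutes_inv_o[OF s] by (simp_all add: o_assoc[symmetric])

lemma perm_tup_iff:
  assumes s: "\<sigma> permutes {..n}"
  shows "x \<circ> \<sigma> \<in> tup n \<longleftrightarrow> x \<in> tup n"
proof
  assume "x \<circ> \<sigma> \<in> tup n"
  then have "x \<circ> \<sigma> \<circ> inv \<sigma> \<in> tup n" by (rule perm_tup[OF permutes_inv[OF s]])
  then show "x \<in> tup n" by (simp add: perm_inv_cancel[OF s])
qed (rule perm_tup[OF s])

lemma perm_meas:
  fixes A :: "(nat \<Rightarrow> 'a::metric_space) set"
  assumes s: "\<sigma> permutes {..n}" and A: "A \<in> tborel n"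
  shows "(\<lambda>x. x \<circ> \<sigma>) -` A \<in> tborel n"
proof -
  have eq: "(\<lambda>x::nat \<Rightarrow> 'a. x \<circ> \<sigma>) = (\<lambda>x j. (\<lambda>j x. x (\<sigma> j)) j x)" by (auto simp: o_def)
  have m: "(\<lambda>x::nat \<Rightarrow> 'a. x \<circ> \<sigma>) \<in> measurable (PiM {..n} (\<lambda>_. borel)) (PiM {..n} (\<lambda>_. borel))"
    apply (subst eq)
  proof (rule measurable_PiM_single')
    fix j assume j: "j \<in> {..n}"
    show "(\<lambda>x::nat \<Rightarrow> 'a. x (\<sigma> j)) \<in> measurable (PiM {..n} (\<lambda>_. borel)) borel"
      by (rule measurable_component_singleton) (use j permutes_in_image[OF s] in auto)
  next
    show "(\<lambda>x j. x (\<sigma> j)) \<in> space (PiM {..n} (\<lambda>_. borel)) \<rightarrow> (\<Pi>\<^sub>E j\<in>{..n}. space (borel :: 'a measure))"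
      using perm_tup[OF s] by (auto simp: space_tb o_def tup_def)
  qed
  have "(\<lambda>x. x \<circ> \<sigma>) -` A \<inter> space (PiM {..n} (\<lambda>_. borel)) \<in> sets (PiM {..n} (\<lambda>_. (borel :: 'a measure)))"
    by (rule measurable_sets[OF m]) (use A in \<open>simp add: tborel_def\<close>)
  moreover have "(\<lambda>x. x \<circ> \<sigma>) -` A \<subseteq> tup n"
    using tborel_sub[OF A] perm_tup_iff[OF s] by blast
  ultimately show ?thesis by (simp add: tborel_def space_tb Int_absorb2)
qed

lemma perm_bb:
  fixes A :: "(nat \<Rightarrow> 'a::metric_space) set"
  assumes s: "\<sigma> permutes {..n}" and A: "A \<in> bbsets n"
  shows "(\<lambda>x. x \<circ> \<sigma>) -` A \<in> bbsets n"
proof -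
  have At: "A \<in> tborel n" and Ab: "tbounded n A" using A by (auto simp: bbsets_def)
  obtain p r where pr: "\<And>y i. y \<in> A \<Longrightarrow> i \<le> n \<Longrightarrow> dist (y i) p \<le> r" using tbounded_ptE[OF Ab] by blast
  have m: "(\<lambda>x. x \<circ> \<sigma>) -` A \<in> tborel n" by (rule perm_meas[OF s At])
  have "tbounded n ((\<lambda>x. x \<circ> \<sigma>) -` A)"
  proof (rule tbounded_pt[where p = p and r = r])
    show "(\<lambda>x. x \<circ> \<sigma>) -` A \<subseteq> tup n" using tborel_sub[OF m] .
  next
    fix y i assume y: "y \<in> (\<lambda>x. x \<circ> \<sigma>) -` A" and i: "i \<le> n"
    have "inv \<sigma> i \<le> n" using permutes_in_image[OF permutes_inv[OF s], of i] i by simp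
    then have "dist ((y \<circ> \<sigma>) (inv \<sigma> i)) p \<le> r" using pr y by blast
    moreover have "(y \<circ> \<sigma>) (inv \<sigma> i) = y i" by (simp add: permutes_inverses(1)[OF s])
    ultimately show "dist (y i) p \<le> r" by simp
  qed
  then show ?thesis using m by (simp add: bbsets_def)
qed

lemma perm_vimage_inv:
  assumes s: "\<sigma> permutes {..n}"
  shows "(\<lambda>x. x \<circ> inv \<sigma>) -` ((\<lambda>x. x \<circ> \<sigma>) -` A) = A"
  using perm_inv_cancel[OF s] by auto

lemma perm_bb_iff:
  fixes A :: "(nat \<Rightarrow> 'a::metric_space) set"
  assumes s: "\<sigma> permutes {..n}"
  shows "(\<lambda>x. x \<circ> \<sigma>) -` A \<in> bbsets n \<longleftrightarrow> A \<in> bbsets n"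
proof
  assume "(\<lambda>x. x \<circ> \<sigma>) -` A \<in> bbsets n"
  then have "(\<lambda>x. x \<circ> inv \<sigma>) -` ((\<lambda>x. x \<circ> \<sigma>) -` A) \<in> bbsets n" by (rule perm_bb[OF permutes_inv[OF s]])
  then show "A \<in> bbsets n" by (simp add: perm_vimage_inv[OF s])
qed (rule perm_bb[OF s])

lemma perm_cont: "continuous_on UNIV (\<lambda>x::nat \<Rightarrow> 'a::topological_space. x \<circ> \<sigma>)"
  unfolding o_def by (intro continuous_on_coordinatewise_then_product continuous_on_product_coordinates)

lemma perm_vanish:
  fixes \<mu> :: "(nat \<Rightarrow> 'a::metric_space) set \<Rightarrow> complex"
  assumes s: "\<sigma> permutes {..n}" and v: "vanishes_outside n \<mu> S" and inv: "\<forall>x\<in>S. x \<circ> \<sigma> \<in> S"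
  shows "vanishes_outside n (perm_chain \<sigma> \<mu>) S"
  unfolding vanishes_outside_def
proof (intro ballI impI)
  fix C :: "(nat \<Rightarrow> 'a) set" assume C: "C \<in> bbsets n" "C \<inter> S = {}"
  have "(\<lambda>x. x \<circ> \<sigma>) -` C \<inter> S = {}" using C(2) inv by blast
  then show "perm_chain \<sigma> \<mu> C = 0"
    using v perm_bb[OF s C(1)] unfolding vanishes_outside_def perm_chain_def by blast
qed

lemma diag_inv:
  assumes s: "\<sigma> permutes {..n}"
  shows "\<forall>x\<in>(diag_thick n R :: (nat \<Rightarrow> 'a::metric_space) set). x \<circ> \<sigma> \<in> diag_thick n R"
proof
  fix x :: "nat \<Rightarrow> 'a" assume "x \<in> diag_thick n R"
  then obtain m where x: "x \<in> tup n" "\<forall>i\<le>n. dist (x i) m \<le> R" unfolding diag_thick_def by blast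
  have "\<forall>i\<le>n. dist ((x \<circ> \<sigma>) i) m \<le> R"
    using x(2) permutes_in_image[OF s] by simp
  then show "x \<circ> \<sigma> \<in> diag_thick n R" using perm_tup[OF s x(1)] unfolding diag_thick_def by blast
qed

lemma PiE_inv:
  fixes n :: nat and Z :: "'a set"
  assumes s: "\<sigma> permutes {..n}"
  shows "\<forall>x\<in>PiE {..n} (\<lambda>_. Z). x \<circ> \<sigma> \<in> PiE {..n} (\<lambda>_. Z)"
proof
  fix x :: "nat \<Rightarrow> 'a" assume x: "x \<in> PiE {..n} (\<lambda>_. Z)"
  then have xt: "x \<in> tup n" using PiE_tup by blast
  have "\<forall>i\<le>n. (x \<circ> \<sigma>) i \<in> Z" using x permutes_in_image[OF s] by (auto simp: PiE_def)
  then show "x \<circ> \<sigma> \<in> PiE {..n} (\<lambda>_. Z)" using tup_PiE[OF perm_tup[OF s xt]] by blast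
qed

lemma perm_cc:
  fixes \<mu> :: "(nat \<Rightarrow> 'a::metric_space) set \<Rightarrow> complex"
  assumes s: "\<sigma> permutes {..n}" and cc: "coarse_chain n \<mu>"
  shows "coarse_chain n (perm_chain \<sigma> \<mu>)"
proof -
  let ?p = "\<lambda>x::nat \<Rightarrow> 'a. x \<circ> \<sigma>"
  let ?q = "\<lambda>x::nat \<Rightarrow> 'a. x \<circ> inv \<sigma>"
  have z: "\<forall>A. A \<notin> bbsets n \<longrightarrow> perm_chain \<sigma> \<mu> A = 0"
    using cc perm_bb_iff[OF s] unfolding coarse_chain_def perm_chain_def by blast
  have ca: "cm_countably_additive n (perm_chain \<sigma> \<mu>)"
    unfolding cm_countably_additive_def
  proof (intro allI impI)
    fix A :: "nat \<Rightarrow> (nat \<Rightarrow> 'a) set"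
    assume A: "\<forall>k. A k \<in> bbsets n" "disjoint_family A" "(\<Union>k. A k) \<in> bbsets n"
    have 1: "\<forall>k. ?p -` A k \<in> bbsets n" using A(1) perm_bb[OF s] by blast
    have 2: "disjoint_family (\<lambda>k. ?p -` A k)" using A(2) unfolding disjoint_family_on_def by blast
    have UI: "?p -` (\<Union>k. A k) = (\<Union>k. ?p -` A k)" by blast
    have 3: "(\<Union>k. ?p -` A k) \<in> bbsets n" using perm_bb[OF s A(3)] by (simp only: UI)
    have "(\<lambda>k. \<mu> (?p -` A k)) sums \<mu> (\<Union>k. ?p -` A k)"
      using cc[unfolded coarse_chain_def, THEN conjunct2, THEN conjunct1, unfolded cm_countably_additive_def,
          THEN spec[of _ "\<lambda>k. ?p -` A k"]] 1 2 3 by blast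
    then show "(\<lambda>k. perm_chain \<sigma> \<mu> (A k)) sums perm_chain \<sigma> \<mu> (\<Union>k. A k)"
      unfolding perm_chain_def by (simp only: UI)
  qed
  have rg: "cm_regular n (perm_chain \<sigma> \<mu>)"
    unfolding cm_regular_def
  proof (intro ballI allI impI)
    fix A :: "(nat \<Rightarrow> 'a) set" and e :: real assume A: "A \<in> bbsets n" and e: "0 < e"
    have A': "?p -` A \<in> bbsets n" by (rule perm_bb[OF s A])
    obtain K U where KU: "compact K" "K \<subseteq> ?p -` A" "open U" "?p -` A \<subseteq> U"
      "\<forall>C\<in>bbsets n. C \<subseteq> U - K \<longrightarrow> cmod (\<mu> C) < e"
      using cc A' e unfolding coarse_chain_def cm_regular_def by meson
    show "\<exists>K U. compact K \<and> K \<subseteq> A \<and> open U \<and> A \<subseteq> U \<and>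
        (\<forall>C\<in>bbsets n. C \<subseteq> U - K \<longrightarrow> cmod (perm_chain \<sigma> \<mu> C) < e)"
    proof (intro exI conjI ballI impI)
      show "compact (?p ` K)" by (rule compact_continuous_image[OF continuous_on_subset[OF perm_cont] KU(1)]) simp
      show "?p ` K \<subseteq> A" using KU(2) by blast
      have "open (?q -` U \<inter> UNIV)"
        using continuous_on_open_vimage[of UNIV ?q] perm_cont[of "inv \<sigma>"] KU(3) by auto
      then show "open (?q -` U)" by simp
      show "A \<subseteq> ?q -` U"
      proof
        fix y assume "y \<in> A"
        then have "?q y \<in> ?p -` A" by (simp add: perm_inv_cancel(2)[OF s])
        then show "y \<in> ?q -` U" using KU(4) by blast
      qed
      fix C :: "(nat \<Rightarrow> 'a) set" assume C: "C \<in> bbsets n" "C \<subseteq> ?q -` U - ?p ` K"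
      have "?p -` C \<subseteq> U - K"
      proof
        fix x assume x: "x \<in> ?p -` C"
        then have "?q (?p x) \<in> U" using C(2) by blast
        then have "x \<in> U" by (simp add: perm_inv_cancel(1)[OF s])
        moreover have "x \<notin> K" using x C(2) by blast
        ultimately show "x \<in> U - K" by blast
      qed
      then show "cmod (perm_chain \<sigma> \<mu> C) < e"
        using KU(5) perm_bb[OF s C(1)] unfolding perm_chain_def by blast
    qed
  qed
  obtain R where R: "vanishes_outside n \<mu> (diag_thick n R)" using cc coarse_chain_def by blast
  have "vanishes_outside n (perm_chain \<sigma> \<mu>) (diag_thick n R)"
    by (rule perm_vanish[OF s R diag_inv[OF s]])
  then show ?thesis using z ca rg unfolding coarse_chain_def by blast
qed

definition Tsym :: "nat \<Rightarrow> ((nat \<Rightarrow> 'a) set \<Rightarrow> complex) \<Rightarrow> (nat \<Rightarrow> 'a) set \<Rightarrow> complex" where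
  "Tsym n \<mu> = (\<lambda>A. \<Sum>\<sigma>\<in>{\<sigma>. \<sigma> permutes {..n}}. of_int (sign \<sigma>) * perm_chain \<sigma> \<mu> A)"

lemma perm_chain_comp: "perm_chain \<sigma> (perm_chain \<tau> \<mu>) = perm_chain (\<tau> \<circ> \<sigma>) \<mu>"
  unfolding perm_chain_def by (rule ext) (simp add: vimage_def o_assoc)

lemma bij_perm_left:
  assumes t: "\<tau> permutes {..n}"
  shows "bij_betw (\<lambda>\<sigma>. \<tau> \<circ> \<sigma>) {\<sigma>. \<sigma> permutes {..n}} {\<sigma>. \<sigma> permutes {..n}}"
proof (rule bij_betw_byWitness[where f' = "\<lambda>\<sigma>. inv \<tau> \<circ> \<sigma>"])
  show "\<forall>a\<in>{\<sigma>. \<sigma> permutes {..n}}. inv \<tau> \<circ> (\<tau> \<circ> a) = a"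
    using permutes_inv_o(2)[OF t] by (simp add: o_assoc)
  show "\<forall>a\<in>{\<sigma>. \<sigma> permutes {..n}}. \<tau> \<circ> (inv \<tau> \<circ> a) = a"
    using permutes_inv_o(1)[OF t] by (simp add: o_assoc)
  show "(\<lambda>\<sigma>. \<tau> \<circ> \<sigma>) ` {\<sigma>. \<sigma> permutes {..n}} \<subseteq> {\<sigma>. \<sigma> permutes {..n}}"
    using permutes_compose[OF _ t] by blast
  show "(\<lambda>\<sigma>. inv \<tau> \<circ> \<sigma>) ` {\<sigma>. \<sigma> permutes {..n}} \<subseteq> {\<sigma>. \<sigma> permutes {..n}}"
    using permutes_compose[OF _ permutes_inv[OF t]] by blast
qed

lemma T_perm:
  assumes t: "\<tau> permutes {..n}"
  shows "Tsym n (perm_chain \<tau> a) A = of_int (sign \<tau>) * Tsym n a A"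
proof -
  let ?P = "{\<sigma>. \<sigma> permutes {..n}}"
  have pt: "permutation \<tau>" using t permutation_permutes by blast
  have "Tsym n a A = (\<Sum>\<sigma>\<in>?P. of_int (sign (\<tau> \<circ> \<sigma>)) * perm_chain (\<tau> \<circ> \<sigma>) a A)"
    unfolding Tsym_def by (rule sum.reindex_bij_betw[OF bij_perm_left[OF t], symmetric])
  also have "\<dots> = (\<Sum>\<sigma>\<in>?P. of_int (sign \<tau>) * (of_int (sign \<sigma>) * perm_chain (\<tau> \<circ> \<sigma>) a A))"
  proof (rule sum.cong[OF refl])
    fix \<sigma> assume "\<sigma> \<in> ?P"
    then have "permutation \<sigma>" using permutation_permutes by blast
    then show "of_int (sign (\<tau> \<circ> \<sigma>)) * perm_chain (\<tau> \<circ> \<sigma>) a A =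
        of_int (sign \<tau>) * (of_int (sign \<sigma>) * perm_chain (\<tau> \<circ> \<sigma>) a A)"
      using sign_compose[OF pt] by simp
  qed
  also have "\<dots> = of_int (sign \<tau>) * Tsym n (perm_chain \<tau> a) A"
    unfolding Tsym_def perm_chain_comp by (simp add: sum_distrib_left)
  finally have "of_int (sign \<tau>) * Tsym n a A = of_int (sign \<tau>) * (of_int (sign \<tau>) * Tsym n (perm_chain \<tau> a) A)"
    by simp
  also have "\<dots> = Tsym n (perm_chain \<tau> a) A"
    by (simp add: mult.assoc[symmetric] of_int_mult[symmetric])
  finally show ?thesis by simp
qed

lemma T_sum: "Tsym n (\<lambda>A. \<Sum>j\<in>J. f j A) A = (\<Sum>j\<in>J. Tsym n (f j) A)"
  unfolding Tsym_def perm_chain_def by (simp add: sum_distrib_left sum.swap[of _ J])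

lemma T_diff: "Tsym n (\<lambda>A. f A - g A) A = Tsym n f A - Tsym n g A"
  unfolding Tsym_def perm_chain_def by (simp add: right_diff_distrib sum_subtractf)

lemma T_scale: "Tsym n (\<lambda>A. c * f A) A = c * Tsym n f A"
  unfolding Tsym_def perm_chain_def by (simp add: sum_distrib_left mult.left_commute)

lemma null_T:
  assumes "\<nu> \<in> CX_null n Z"
  shows "Tsym n \<nu> A = 0"
proof -
  obtain k :: nat and \<mu>s \<sigma>s where h: "\<forall>j<k. \<mu>s j \<in> CX n Z \<and> \<sigma>s j permutes {..n}"
    and nu: "\<nu> = (\<lambda>A. \<Sum>j<k. \<mu>s j A - of_int (sign (\<sigma>s j)) * perm_chain (\<sigma>s j) (\<mu>s j) A)"
    using assms unfolding CX_null_def by blast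
  have "Tsym n \<nu> A = (\<Sum>j<k. Tsym n (\<lambda>A. \<mu>s j A - of_int (sign (\<sigma>s j)) * perm_chain (\<sigma>s j) (\<mu>s j) A) A)"
    unfolding nu by (rule T_sum)
  also have "\<dots> = (\<Sum>j<k. 0)"
  proof (rule sum.cong[OF refl])
    fix j assume "j \<in> {..<k}"
    then have s: "\<sigma>s j permutes {..n}" using h by blast
    have "Tsym n (\<lambda>A. \<mu>s j A - of_int (sign (\<sigma>s j)) * perm_chain (\<sigma>s j) (\<mu>s j) A) A
        = Tsym n (\<mu>s j) A - of_int (sign (\<sigma>s j)) * (of_int (sign (\<sigma>s j)) * Tsym n (\<mu>s j) A)"
      by (simp only: T_diff T_scale T_perm[OF s])
    also have "\<dots> = 0" by (simp add: mult.assoc[symmetric] of_int_mult[symmetric])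
    finally show "Tsym n (\<lambda>A. \<mu>s j A - of_int (sign (\<sigma>s j)) * perm_chain (\<sigma>s j) (\<mu>s j) A) A = 0" .
  qed
  finally show ?thesis by simp
qed

lemma null_fin:
  assumes fin: "finite I" and h: "\<And>i. i \<in> I \<Longrightarrow> ms i \<in> CX n Z \<and> ss i permutes {..n}"
  shows "(\<lambda>A. \<Sum>i\<in>I. ms i A - of_int (sign (ss i)) * perm_chain (ss i) (ms i) A) \<in> CX_null n Z"
proof -
  obtain g where g: "bij_betw g {0..<card I} I" using ex_bij_betw_nat_finite[OF fin] by blast
  have g': "bij_betw g {..<card I} I" using g by (simp add: atLeast0LessThan)
  have gI: "g j \<in> I" if "j < card I" for j using g' that bij_betwE by blast
  have eq: "(\<lambda>A. \<Sum>i\<in>I. ms i A - of_int (sign (ss i)) * perm_chain (ss i) (ms i) A) =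
      (\<lambda>A. \<Sum>j<card I. (ms \<circ> g) j A - of_int (sign ((ss \<circ> g) j)) * perm_chain ((ss \<circ> g) j) ((ms \<circ> g) j) A)"
    unfolding o_def by (rule ext, rule sum.reindex_bij_betw[OF g', symmetric])
  show ?thesis unfolding CX_null_def eq
    using h gI by (intro CollectI exI[of _ "card I"] exI[of _ "ms \<circ> g"] exI[of _ "ss \<circ> g"] conjI refl) auto
qed

lemma CX_scale:
  assumes "\<mu> \<in> CX n Z" shows "(\<lambda>A. c * \<mu> A) \<in> CX n Z"
proof -
  obtain Y where Y: "coarse_chain n \<mu>" "Y \<in> Z" "vanishes_outside n \<mu> (PiE {..n} (\<lambda>_. Y))"
    using assms unfolding CX_def by blast
  have "vanishes_outside n (\<lambda>A. c * \<mu> A) (PiE {..n} (\<lambda>_. Y))"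
    using Y(3) unfolding vanishes_outside_def by auto
  then show ?thesis using cc_scale[OF Y(1)] Y(2) unfolding CX_def by blast
qed

lemma card_perm_pos: "card {\<sigma>. \<sigma> permutes {..(n::nat)}} > 0"
  using card_permutations[of "{..n}" "Suc n"] by simp

lemma finite_perm: "finite {\<sigma>. \<sigma> permutes {..(n::nat)}}"
  using finite_permutations[of "{..n}"] by simp

lemma null_from:
  assumes m: "\<mu> \<in> CX n Z"
  shows "(\<lambda>A. \<mu> A - Tsym n \<mu> A / of_nat (card {\<sigma>. \<sigma> permutes {..n}})) \<in> CX_null n Z"
proof -
  let ?P = "{\<sigma>. \<sigma> permutes {..n}}"
  define N :: complex where "N = of_nat (card ?P)"
  have N: "N \<noteq> 0" using card_perm_pos[of n] by (simp add: N_def)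
  define c where "c = 1 / N"
  have m': "(\<lambda>A. c * \<mu> A) \<in> CX n Z" by (rule CX_scale[OF m])
  have "(\<lambda>A. \<Sum>\<sigma>\<in>?P. (\<lambda>_. (\<lambda>A. c * \<mu> A)) \<sigma> A - of_int (sign (id \<sigma>)) * perm_chain (id \<sigma>) ((\<lambda>_. (\<lambda>A. c * \<mu> A)) \<sigma>) A) \<in> CX_null n Z"
    by (rule null_fin[OF finite_perm]) (use m' in auto)
  moreover have "(\<lambda>A. \<Sum>\<sigma>\<in>?P. (\<lambda>_. (\<lambda>A. c * \<mu> A)) \<sigma> A - of_int (sign (id \<sigma>)) * perm_chain (id \<sigma>) ((\<lambda>_. (\<lambda>A. c * \<mu> A)) \<sigma>) A)
      = (\<lambda>A. \<mu> A - Tsym n \<mu> A / N)"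
  proof (rule ext)
    fix A
    have "(\<Sum>\<sigma>\<in>?P. (\<lambda>_. (\<lambda>A. c * \<mu> A)) \<sigma> A - of_int (sign (id \<sigma>)) * perm_chain (id \<sigma>) ((\<lambda>_. (\<lambda>A. c * \<mu> A)) \<sigma>) A)
        = N * (c * \<mu> A) - c * Tsym n \<mu> A"
      unfolding Tsym_def perm_chain_def N_def
      by (simp add: sum_subtractf sum_distrib_left mult.left_commute)
    also have "\<dots> = \<mu> A - Tsym n \<mu> A / N" using N by (simp add: c_def field_simps)
    finally show "(\<Sum>\<sigma>\<in>?P. (\<lambda>_. (\<lambda>A. c * \<mu> A)) \<sigma> A - of_int (sign (id \<sigma>)) * perm_chain (id \<sigma>) ((\<lambda>_. (\<lambda>A. c * \<mu> A)) \<sigma>) A)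
        = \<mu> A - Tsym n \<mu> A / N" .
  qed
  ultimately show ?thesis by (simp add: N_def)
qed

lemma CX_perm:
  assumes s: "\<sigma> permutes {..n}" and m: "\<mu> \<in> CX n Z"
  shows "perm_chain \<sigma> \<mu> \<in> CX n Z"
proof -
  obtain Y where Y: "coarse_chain n \<mu>" "Y \<in> Z" "vanishes_outside n \<mu> (PiE {..n} (\<lambda>_. Y))"
    using m unfolding CX_def by blast
  show ?thesis using perm_cc[OF s Y(1)] perm_vanish[OF s Y(3) PiE_inv[OF s]] Y(2) unfolding CX_def by blast
qed

lemma CX_T:
  assumes m: "\<mu> \<in> CX n Z"
  shows "(\<lambda>A. Tsym n \<mu> A / N) \<in> CX n Z"
proof -
  obtain Y where Y: "coarse_chain n \<mu>" "Y \<in> Z" "vanishes_outside n \<mu> (PiE {..n} (\<lambda>_. Y))"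
    using m unfolding CX_def by blast
  let ?P = "{\<sigma>. \<sigma> permutes {..n}}"
  have eq: "(\<lambda>A. Tsym n \<mu> A / N) = (\<lambda>A. \<Sum>\<sigma>\<in>?P. (of_int (sign \<sigma>) / N) * perm_chain \<sigma> \<mu> A)"
    unfolding Tsym_def by (rule ext) (simp add: sum_divide_distrib)
  have cc: "coarse_chain n (\<lambda>A. \<Sum>\<sigma>\<in>?P. (of_int (sign \<sigma>) / N) * perm_chain \<sigma> \<mu> A)"
    by (rule cc_sum[OF finite_perm]) (use cc_scale perm_cc Y(1) in blast)
  have vs: "vanishes_outside n (perm_chain \<sigma> \<mu>) (PiE {..n} (\<lambda>_. Y))" if "\<sigma> \<in> ?P" for \<sigma>
    using perm_vanish[OF _ Y(3) PiE_inv] that by blast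
  have "vanishes_outside n (\<lambda>A. \<Sum>\<sigma>\<in>?P. (of_int (sign \<sigma>) / N) * perm_chain \<sigma> \<mu> A) (PiE {..n} (\<lambda>_. Y))"
    using vs unfolding vanishes_outside_def by simp
  then show ?thesis unfolding eq CX_def using cc Y(2) by blast
qed

lemma CX_zero: "big_family \<X> \<Longrightarrow> (\<lambda>_. 0) \<in> CX n \<X>"
  unfolding CX_def using cc_zero bf_empty unfolding vanishes_outside_def by blast

lemma null_diff:
  assumes n1: "\<nu>1 \<in> CX_null n \<X>" and n2: "\<nu>2 \<in> CX_null n \<Y>"
    and bX: "big_family \<X>" and bY: "big_family \<Y>"
  shows "(\<lambda>A. \<nu>1 A - \<nu>2 A) \<in> CX_null n (fam_Un \<X> \<Y>)"
proof -
  obtain k1 :: nat and a s1 where h1: "\<forall>j<k1. a j \<in> CX n \<X> \<and> s1 j permutes {..n}"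
    and e1: "\<nu>1 = (\<lambda>A. \<Sum>j<k1. a j A - of_int (sign (s1 j)) * perm_chain (s1 j) (a j) A)"
    using n1 unfolding CX_null_def by blast
  obtain k2 :: nat and b s2 where h2: "\<forall>j<k2. b j \<in> CX n \<Y> \<and> s2 j permutes {..n}"
    and e2: "\<nu>2 = (\<lambda>A. \<Sum>j<k2. b j A - of_int (sign (s2 j)) * perm_chain (s2 j) (b j) A)"
    using n2 unfolding CX_null_def by blast
  define ms where "ms = case_sum a (\<lambda>j A. - b j A)"
  define ss where "ss = case_sum s1 s2"
  have ha: "a j \<in> CX n (fam_Un \<X> \<Y>)" if "j < k1" for j
    using CX_diff_Un[of "a j" n \<X> "\<lambda>_. 0" \<Y>] h1 that CX_zero[OF bY] by simp
  have hb: "(\<lambda>A. - b j A) \<in> CX n (fam_Un \<X> \<Y>)" if "j < k2" for j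
    using CX_diff_Un[of "\<lambda>_. 0" n \<X> "b j" \<Y>] h2 that CX_zero[OF bX] by simp
  have "(\<lambda>A. \<Sum>i\<in>{..<k1} <+> {..<k2}. ms i A - of_int (sign (ss i)) * perm_chain (ss i) (ms i) A) \<in> CX_null n (fam_Un \<X> \<Y>)"
  proof (rule null_fin)
    fix i assume "i \<in> {..<k1} <+> {..<k2}"
    then show "ms i \<in> CX n (fam_Un \<X> \<Y>) \<and> ss i permutes {..n}"
      using ha hb h1 h2 by (auto simp: ms_def ss_def)
  qed simp
  moreover have "(\<lambda>A. \<Sum>i\<in>{..<k1} <+> {..<k2}. ms i A - of_int (sign (ss i)) * perm_chain (ss i) (ms i) A)
      = (\<lambda>A. \<nu>1 A - \<nu>2 A)"
    unfolding e1 e2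
    by (rule ext) (simp add: sum.Plus ms_def ss_def perm_chain_def sum_subtractf sum_negf)
  ultimately show ?thesis by simp
qed

theorem proposition3p10:
  fixes \<X> \<Y> :: "'a::metric_space set set"
  assumes proper: "\<forall>(x::'a) r. compact (cball x r)"
    and bX: "big_family \<X>" and bY: "big_family \<Y>"
  shows
    \<comment> \<open>plain coarse chains: well-defined maps, exactness in each degree, chain maps\<close>
    "(\<forall>n.
       (\<forall>\<mu>\<in>CX n (fam_Int \<X> \<Y>). \<mu> \<in> CX n \<X> \<and> \<mu> \<in> CX n \<Y>) \<and>
       (\<forall>\<mu>1\<in>CX n \<X>. \<forall>\<mu>2\<in>CX n \<Y>. (\<lambda>A. \<mu>1 A - \<mu>2 A) \<in> CX n (fam_Un \<X> \<Y>)) \<and>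
       (\<forall>\<mu>\<in>CX n (fam_Int \<X> \<Y>). (\<mu>, \<mu>) = ((\<lambda>_. 0), (\<lambda>_. 0)) \<longrightarrow> \<mu> = (\<lambda>_. 0)) \<and>
       (\<forall>\<mu>\<in>CX n (fam_Int \<X> \<Y>). (\<lambda>A. \<mu> A - \<mu> A) = (\<lambda>_. 0)) \<and>
       (\<forall>\<mu>1\<in>CX n \<X>. \<forall>\<mu>2\<in>CX n \<Y>. (\<lambda>A. \<mu>1 A - \<mu>2 A) = (\<lambda>_. 0) \<longrightarrow>
          (\<exists>\<mu>\<in>CX n (fam_Int \<X> \<Y>). (\<mu>1, \<mu>2) = (\<mu>, \<mu>))) \<and>
       (\<forall>\<nu>\<in>CX n (fam_Un \<X> \<Y>). \<exists>\<mu>1\<in>CX n \<X>. \<exists>\<mu>2\<in>CX n \<Y>. \<nu> = (\<lambda>A. \<mu>1 A - \<mu>2 A)) \<and>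
       (0 < n \<longrightarrow> (\<forall>\<mu>1\<in>CX n \<X>. \<forall>\<mu>2\<in>CX n \<Y>.
          bdry n (\<lambda>A. \<mu>1 A - \<mu>2 A) = (\<lambda>B. bdry n \<mu>1 B - bdry n \<mu>2 B))))
   \<and>
    \<comment> \<open>anti-symmetric quotients CX^alpha = CX / CX_null, via representatives\<close>
    (\<forall>n.
       CX_null n (fam_Int \<X> \<Y>) \<subseteq> CX_null n \<X> \<inter> CX_null n \<Y> \<and>
       (\<forall>\<mu>1\<in>CX_null n \<X>. \<forall>\<mu>2\<in>CX_null n \<Y>. (\<lambda>A. \<mu>1 A - \<mu>2 A) \<in> CX_null n (fam_Un \<X> \<Y>)) \<and>
       (\<forall>\<mu>\<in>CX n (fam_Int \<X> \<Y>). \<mu> \<in> CX_null n \<X> \<and> \<mu> \<in> CX_null n \<Y> \<longrightarrow>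
          \<mu> \<in> CX_null n (fam_Int \<X> \<Y>)) \<and>
       (\<forall>\<mu>1\<in>CX n \<X>. \<forall>\<mu>2\<in>CX n \<Y>. (\<lambda>A. \<mu>1 A - \<mu>2 A) \<in> CX_null n (fam_Un \<X> \<Y>) \<longrightarrow>
          (\<exists>\<mu>\<in>CX n (fam_Int \<X> \<Y>). (\<lambda>A. \<mu>1 A - \<mu> A) \<in> CX_null n \<X> \<and>
                                     (\<lambda>A. \<mu>2 A - \<mu> A) \<in> CX_null n \<Y>)) \<and>
       (\<forall>\<nu>\<in>CX n (fam_Un \<X> \<Y>). \<exists>\<mu>1\<in>CX n \<X>. \<exists>\<mu>2\<in>CX n \<Y>.
          (\<lambda>A. \<nu> A - (\<mu>1 A - \<mu>2 A)) \<in> CX_null n (fam_Un \<X> \<Y>)))"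
proof -
  have P1: "(\<forall>\<mu>\<in>CX n (fam_Int \<X> \<Y>). \<mu> \<in> CX n \<X> \<and> \<mu> \<in> CX n \<Y>) \<and>
       (\<forall>\<mu>1\<in>CX n \<X>. \<forall>\<mu>2\<in>CX n \<Y>. (\<lambda>A. \<mu>1 A - \<mu>2 A) \<in> CX n (fam_Un \<X> \<Y>)) \<and>
       (\<forall>\<mu>\<in>CX n (fam_Int \<X> \<Y>). (\<mu>, \<mu>) = ((\<lambda>_. 0), (\<lambda>_. 0)) \<longrightarrow> \<mu> = (\<lambda>_. 0)) \<and>
       (\<forall>\<mu>\<in>CX n (fam_Int \<X> \<Y>). (\<lambda>A. \<mu> A - \<mu> A) = (\<lambda>_. 0)) \<and>
       (\<forall>\<mu>1\<in>CX n \<X>. \<forall>\<mu>2\<in>CX n \<Y>. (\<lambda>A. \<mu>1 A - \<mu>2 A) = (\<lambda>_. 0) \<longrightarrow>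
          (\<exists>\<mu>\<in>CX n (fam_Int \<X> \<Y>). (\<mu>1, \<mu>2) = (\<mu>, \<mu>))) \<and>
       (\<forall>\<nu>\<in>CX n (fam_Un \<X> \<Y>). \<exists>\<mu>1\<in>CX n \<X>. \<exists>\<mu>2\<in>CX n \<Y>. \<nu> = (\<lambda>A. \<mu>1 A - \<mu>2 A)) \<and>
       (0 < n \<longrightarrow> (\<forall>\<mu>1\<in>CX n \<X>. \<forall>\<mu>2\<in>CX n \<Y>.
          bdry n (\<lambda>A. \<mu>1 A - \<mu>2 A) = (\<lambda>B. bdry n \<mu>1 B - bdry n \<mu>2 B)))" for n
  proof (intro conjI ballI impI)
    fix \<mu> assume "\<mu> \<in> CX n (fam_Int \<X> \<Y>)"
    then show "\<mu> \<in> CX n \<X>" using CX_Int_sub bX bY by blast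
  next
    fix \<mu> assume "\<mu> \<in> CX n (fam_Int \<X> \<Y>)"
    then show "\<mu> \<in> CX n \<Y>" using CX_Int_sub bX bY by blast
  next
    fix \<mu>1 \<mu>2 assume "\<mu>1 \<in> CX n \<X>" "\<mu>2 \<in> CX n \<Y>"
    then show "(\<lambda>A. \<mu>1 A - \<mu>2 A) \<in> CX n (fam_Un \<X> \<Y>)" by (rule CX_diff_Un)
  next
    fix \<mu> :: "(nat \<Rightarrow> 'a) set \<Rightarrow> complex" assume "(\<mu>, \<mu>) = ((\<lambda>_. 0), (\<lambda>_. 0))"
    then show "\<mu> = (\<lambda>_. 0)" by simp
  next
    fix \<mu> :: "(nat \<Rightarrow> 'a) set \<Rightarrow> complex"
    show "(\<lambda>A. \<mu> A - \<mu> A) = (\<lambda>_. 0)" by simp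
  next
    fix \<mu>1 \<mu>2 assume m: "\<mu>1 \<in> CX n \<X>" "\<mu>2 \<in> CX n \<Y>" and z: "(\<lambda>A. \<mu>1 A - \<mu>2 A) = (\<lambda>_. 0)"
    have "\<mu>1 = \<mu>2"
    proof (rule ext)
      fix A show "\<mu>1 A = \<mu>2 A" using fun_cong[OF z, of A] by simp
    qed
    then have "\<mu>1 \<in> CX n (fam_Int \<X> \<Y>)" using CX_both_Int[OF m(1) _ bX bY] m(2) by simp
    then show "\<exists>\<mu>\<in>CX n (fam_Int \<X> \<Y>). (\<mu>1, \<mu>2) = (\<mu>, \<mu>)" using \<open>\<mu>1 = \<mu>2\<close> by blast
  next
    fix \<nu> assume "\<nu> \<in> CX n (fam_Un \<X> \<Y>)"
    then show "\<exists>\<mu>1\<in>CX n \<X>. \<exists>\<mu>2\<in>CX n \<Y>. \<nu> = (\<lambda>A. \<mu>1 A - \<mu>2 A)" by (rule CX_decomp[OF bX bY])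
  next
    fix \<mu>1 \<mu>2 assume n: "0 < n" and m: "\<mu>1 \<in> CX n \<X>" "\<mu>2 \<in> CX n \<Y>"
    have "coarse_chain n \<mu>1" "coarse_chain n \<mu>2" using m unfolding CX_def by auto
    then show "bdry n (\<lambda>A. \<mu>1 A - \<mu>2 A) = (\<lambda>B. bdry n \<mu>1 B - bdry n \<mu>2 B)"
      by (rule bdry_diff[OF proper _ _ n])
  qed
  have P2: "CX_null n (fam_Int \<X> \<Y>) \<subseteq> CX_null n \<X> \<inter> CX_null n \<Y> \<and>
       (\<forall>\<mu>1\<in>CX_null n \<X>. \<forall>\<mu>2\<in>CX_null n \<Y>. (\<lambda>A. \<mu>1 A - \<mu>2 A) \<in> CX_null n (fam_Un \<X> \<Y>)) \<and>
       (\<forall>\<mu>\<in>CX n (fam_Int \<X> \<Y>). \<mu> \<in> CX_null n \<X> \<and> \<mu> \<in> CX_null n \<Y> \<longrightarrow>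
          \<mu> \<in> CX_null n (fam_Int \<X> \<Y>)) \<and>
       (\<forall>\<mu>1\<in>CX n \<X>. \<forall>\<mu>2\<in>CX n \<Y>. (\<lambda>A. \<mu>1 A - \<mu>2 A) \<in> CX_null n (fam_Un \<X> \<Y>) \<longrightarrow>
          (\<exists>\<mu>\<in>CX n (fam_Int \<X> \<Y>). (\<lambda>A. \<mu>1 A - \<mu> A) \<in> CX_null n \<X> \<and>
                                     (\<lambda>A. \<mu>2 A - \<mu> A) \<in> CX_null n \<Y>)) \<and>
       (\<forall>\<nu>\<in>CX n (fam_Un \<X> \<Y>). \<exists>\<mu>1\<in>CX n \<X>. \<exists>\<mu>2\<in>CX n \<Y>.
          (\<lambda>A. \<nu> A - (\<mu>1 A - \<mu>2 A)) \<in> CX_null n (fam_Un \<X> \<Y>))" for n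
  proof (intro conjI ballI impI)
    show "CX_null n (fam_Int \<X> \<Y>) \<subseteq> CX_null n \<X> \<inter> CX_null n \<Y>"
    proof
      fix \<nu> assume "\<nu> \<in> CX_null n (fam_Int \<X> \<Y>)"
      then obtain k :: nat and \<mu>s \<sigma>s where h: "\<forall>j<k. \<mu>s j \<in> CX n (fam_Int \<X> \<Y>) \<and> \<sigma>s j permutes {..n}"
        and e: "\<nu> = (\<lambda>A. \<Sum>j<k. \<mu>s j A - of_int (sign (\<sigma>s j)) * perm_chain (\<sigma>s j) (\<mu>s j) A)"
        unfolding CX_null_def by blast
      have "\<forall>j<k. \<mu>s j \<in> CX n \<X> \<and> \<sigma>s j permutes {..n}" "\<forall>j<k. \<mu>s j \<in> CX n \<Y> \<and> \<sigma>s j permutes {..n}"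
        using h CX_Int_sub[OF _ bX bY] by blast+
      then show "\<nu> \<in> CX_null n \<X> \<inter> CX_null n \<Y>" unfolding CX_null_def using e by blast
    qed
  next
    fix \<mu>1 \<mu>2 assume "\<mu>1 \<in> CX_null n \<X>" "\<mu>2 \<in> CX_null n \<Y>"
    then show "(\<lambda>A. \<mu>1 A - \<mu>2 A) \<in> CX_null n (fam_Un \<X> \<Y>)" by (rule null_diff[OF _ _ bX bY])
  next
    fix \<mu> assume m: "\<mu> \<in> CX n (fam_Int \<X> \<Y>)" and nl: "\<mu> \<in> CX_null n \<X> \<and> \<mu> \<in> CX_null n \<Y>"
    have "Tsym n \<mu> A = 0" for A using null_T nl by blast
    then have "(\<lambda>A. \<mu> A - Tsym n \<mu> A / (of_nat (card {\<sigma>. \<sigma> permutes {..n}}) :: complex)) = \<mu>" by simp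
    then show "\<mu> \<in> CX_null n (fam_Int \<X> \<Y>)" using null_from[OF m] by simp
  next
    fix \<mu>1 \<mu>2 assume m1: "\<mu>1 \<in> CX n \<X>" and m2: "\<mu>2 \<in> CX n \<Y>"
      and nl: "(\<lambda>A. \<mu>1 A - \<mu>2 A) \<in> CX_null n (fam_Un \<X> \<Y>)"
    have TT: "Tsym n \<mu>1 A = Tsym n \<mu>2 A" for A
      using null_T[OF nl, of A] T_diff[of n \<mu>1 \<mu>2 A] by simp
    define \<mu> where "\<mu> = (\<lambda>A. Tsym n \<mu>1 A / (of_nat (card {\<sigma>. \<sigma> permutes {..n}}) :: complex))"
    have a: "\<mu> \<in> CX n \<X>" unfolding \<mu>_def by (rule CX_T[OF m1])
    have "\<mu> = (\<lambda>A. Tsym n \<mu>2 A / (of_nat (card {\<sigma>. \<sigma> permutes {..n}}) :: complex))" unfolding \<mu>_def using TT by simp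
    then have b: "\<mu> \<in> CX n \<Y>" using CX_T[OF m2] by simp
    have c: "\<mu> \<in> CX n (fam_Int \<X> \<Y>)" by (rule CX_both_Int[OF a b bX bY])
    have d1: "(\<lambda>A. \<mu>1 A - \<mu> A) \<in> CX_null n \<X>" unfolding \<mu>_def by (rule null_from[OF m1])
    have d2: "(\<lambda>A. \<mu>2 A - \<mu> A) \<in> CX_null n \<Y>" unfolding \<mu>_def using null_from[OF m2] TT by simp
    show "\<exists>\<mu>\<in>CX n (fam_Int \<X> \<Y>). (\<lambda>A. \<mu>1 A - \<mu> A) \<in> CX_null n \<X> \<and> (\<lambda>A. \<mu>2 A - \<mu> A) \<in> CX_null n \<Y>"
      using c d1 d2 by blast
  next
    fix \<nu> assume "\<nu> \<in> CX n (fam_Un \<X> \<Y>)"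
    then obtain \<mu>1 \<mu>2 where m: "\<mu>1 \<in> CX n \<X>" "\<mu>2 \<in> CX n \<Y>" "\<nu> = (\<lambda>A. \<mu>1 A - \<mu>2 A)"
      using CX_decomp[OF bX bY] by blast
    have e: "(\<lambda>A. \<nu> A - (\<mu>1 A - \<mu>2 A)) = (\<lambda>_. 0)" using m(3) by simp
    have z: "(\<lambda>_. 0) \<in> CX_null n (fam_Un \<X> \<Y>)"
      unfolding CX_null_def
      by (rule CollectI, rule exI[of _ "0::nat"], rule exI[of _ "\<lambda>_ _. 0"], rule exI[of _ "\<lambda>_. id"]) simp
    have w: "(\<lambda>A. \<nu> A - (\<mu>1 A - \<mu>2 A)) \<in> CX_null n (fam_Un \<X> \<Y>)" using z by (simp only: e)
    show "\<exists>\<mu>1\<in>CX n \<X>. \<exists>\<mu>2\<in>CX n \<Y>. (\<lambda>A. \<nu> A - (\<mu>1 A - \<mu>2 A)) \<in> CX_null n (fam_Un \<X> \<Y>)"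
    proof (rule bexI[where x = \<mu>1], rule bexI[where x = \<mu>2])
      show "(\<lambda>A. \<nu> A - (\<mu>1 A - \<mu>2 A)) \<in> CX_null n (fam_Un \<X> \<Y>)" by (rule w)
    qed (use m in auto)
  qed
  show ?thesis using P1 P2 by blast
qed

end
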